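(* Let $(M,g)$ be an $n$-dimensional Lorentzian spacetime with $n\ge 4$ admitting a null vector field $\boldsymbol{\ell}$ with $L_{i0}=0$ and $L_{ij}=0$ for all $i,j$ (a Kundt spacetime), and assume $R_{00}=0$ and $R_{0i}=0$ for all $i$. Then the spacetime is of Weyl type II or more special, i.e. $C_{0i0j}=0$, $C_{010i}=0$ and $C_{0ijk}=0$ for all $i,j,k$.
   Context: Complete $\boldsymbol{\ell}$ to a null frame $\{\boldsymbol{n},\boldsymbol{\ell},\boldsymbol{m}^{(2)},\dots,\boldsymbol{m}^{(n-1)}\}$ with $\ell^a\ell_a=n^an_a=\ell^a m^{(i)}_a=n^a m^{(i)}_a=0$, $\ell^a n_a=1$, $m^{(i)a}m^{(j)}_a=\delta_{ij}$; indices $i,j,k$ range over $2,\dots,n-1$. Frame components: an index $0$ denotes contraction with $\boldsymbol{\ell}$, an index $1$ contraction with $\boldsymbol{n}$, an index $i$ contraction with $\boldsymbol{m}^{(i)}$. Thus $L_{i0}=\ell_{a;b}m^{(i)a}\ell^b$, $L_{ij}=\ell_{a;b}m^{(i)a}m^{(j)b}$, $R_{00}=R_{ab}\ell^a\ell^b$, $R_{0i}=R_{ab}\ell^a m^{(i)b}$, and e.g. $C_{010i}=C_{abcd}\ell^a n^b\ell^c m^{(i)d}$, $C_{0ijk}=C_{abcd}\ell^a m^{(i)b}m^{(j)c}m^{(k)d}$ for the Weyl tensor $C$. The spacetime is of type II or more special (with respect to $\boldsymbol{\ell}$) when all Weyl frame components of boost weight $2$ and $1$ vanish, i.e. $C_{0i0j}=C_{010i}=C_{0ijk}=0$.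 *)

theory Defs
  imports "HOL-Analysis.Analysis"
begin

text \<open>Local coordinate description of a spacetime: an open set U of R^n (coordinates
 indexed by the finite type 'n), a metric g given by its component matrix g x $ a $ b.\<close>

definition pd :: "'n::finite \<Rightarrow> (real^'n \<Rightarrow> real) \<Rightarrow> real^'n \<Rightarrow> real" where
  "pd i f x = deriv (\<lambda>t. f (x + t *\<^sub>R axis i 1)) 0"

definition smooth_on :: "(real^'n::finite) set \<Rightarrow> (real^'n \<Rightarrow> real) \<Rightarrow> bool" where
  "smooth_on U f \<longleftrightarrow> (\<forall>is. (foldr pd is f) differentiable_on U)"

definition lorentzian_matrix :: "real^'n::finite^'n \<Rightarrow> bool" where
  "lorentzian_matrix G \<longleftrightarrow> transpose G = G \<and>
     (\<exists>(P::real^'n^'n) k. invertible P \<and>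
        transpose P ** G ** P = (\<chi> a b. if a = b then (if a = k then -1 else 1) else 0))"

definition ginv :: "(real^'n::finite \<Rightarrow> real^'n^'n) \<Rightarrow> real^'n \<Rightarrow> real^'n^'n" where
  "ginv g x = matrix_inv (g x)"

definition Gamma :: "(real^'n::finite \<Rightarrow> real^'n^'n) \<Rightarrow> 'n \<Rightarrow> 'n \<Rightarrow> 'n \<Rightarrow> real^'n \<Rightarrow> real" where
  "Gamma g a b c x = (1/2) * (\<Sum>d\<in>UNIV. ginv g x $ a $ d *
      (pd b (\<lambda>y. g y $ d $ c) x + pd c (\<lambda>y. g y $ d $ b) x - pd d (\<lambda>y. g y $ b $ c) x))"

definition Riem :: "(real^'n::finite \<Rightarrow> real^'n^'n) \<Rightarrow> 'n \<Rightarrow> 'n \<Rightarrow> 'n \<Rightarrow> 'n \<Rightarrow> real^'n \<Rightarrow> real" where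
  "Riem g a b c d x = pd c (\<lambda>y. Gamma g a d b y) x - pd d (\<lambda>y. Gamma g a c b y) x
     + (\<Sum>e\<in>UNIV. Gamma g a c e x * Gamma g e d b x - Gamma g a d e x * Gamma g e c b x)"

definition Riem_low :: "(real^'n::finite \<Rightarrow> real^'n^'n) \<Rightarrow> 'n \<Rightarrow> 'n \<Rightarrow> 'n \<Rightarrow> 'n \<Rightarrow> real^'n \<Rightarrow> real" where
  "Riem_low g a b c d x = (\<Sum>e\<in>UNIV. g x $ a $ e * Riem g e b c d x)"

definition Ric :: "(real^'n::finite \<Rightarrow> real^'n^'n) \<Rightarrow> 'n \<Rightarrow> 'n \<Rightarrow> real^'n \<Rightarrow> real" where
  "Ric g b d x = (\<Sum>a\<in>UNIV. Riem g a b a d x)"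

definition scal :: "(real^'n::finite \<Rightarrow> real^'n^'n) \<Rightarrow> real^'n \<Rightarrow> real" where
  "scal g x = (\<Sum>b\<in>UNIV. \<Sum>d\<in>UNIV. ginv g x $ b $ d * Ric g b d x)"

definition Weyl :: "(real^'n::finite \<Rightarrow> real^'n^'n) \<Rightarrow> 'n \<Rightarrow> 'n \<Rightarrow> 'n \<Rightarrow> 'n \<Rightarrow> real^'n \<Rightarrow> real" where
  "Weyl g a b c d x = (let N = real CARD('n); G = g x in
     Riem_low g a b c d x
     - (G $ a $ c * Ric g b d x - G $ a $ d * Ric g b c x
        - G $ b $ c * Ric g a d x + G $ b $ d * Ric g a c x) / (N - 2)
     + scal g x * (G $ a $ c * G $ b $ d - G $ a $ d * G $ b $ c) / ((N - 1) * (N - 2)))"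

definition ip :: "(real^'n::finite \<Rightarrow> real^'n^'n) \<Rightarrow> real^'n \<Rightarrow> real^'n \<Rightarrow> real^'n \<Rightarrow> real" where
  "ip g x u v = (\<Sum>a\<in>UNIV. \<Sum>b\<in>UNIV. g x $ a $ b * u $ a * v $ b)"

definition cov_low :: "(real^'n::finite \<Rightarrow> real^'n^'n) \<Rightarrow> (real^'n \<Rightarrow> real^'n) \<Rightarrow> 'n \<Rightarrow> 'n \<Rightarrow> real^'n \<Rightarrow> real" where
  "cov_low g l a b x = pd b (\<lambda>y. \<Sum>c\<in>UNIV. g y $ a $ c * l y $ c) x
     - (\<Sum>c\<in>UNIV. Gamma g c a b x * (\<Sum>e\<in>UNIV. g x $ c $ e * l x $ e))"

text \<open>Frame components: contraction of a 2-tensor / 4-tensor with vectors.\<close>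
definition contr2 :: "('n::finite \<Rightarrow> 'n \<Rightarrow> real) \<Rightarrow> real^'n \<Rightarrow> real^'n \<Rightarrow> real" where
  "contr2 T u v = (\<Sum>a\<in>UNIV. \<Sum>b\<in>UNIV. T a b * u $ a * v $ b)"

definition contr4 :: "('n::finite \<Rightarrow> 'n \<Rightarrow> 'n \<Rightarrow> 'n \<Rightarrow> real) \<Rightarrow> real^'n \<Rightarrow> real^'n \<Rightarrow> real^'n \<Rightarrow> real^'n \<Rightarrow> real" where
  "contr4 T u v w z = (\<Sum>a\<in>UNIV. \<Sum>b\<in>UNIV. \<Sum>c\<in>UNIV. \<Sum>d\<in>UNIV.
      T a b c d * u $ a * v $ b * w $ c * z $ d)"

definition null_frame :: "(real^'n::finite \<Rightarrow> real^'n^'n) \<Rightarrow> real^'n \<Rightarrow> real^'n \<Rightarrow> real^'n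
     \<Rightarrow> (nat \<Rightarrow> real^'n) \<Rightarrow> bool" where
  "null_frame g x l nv m \<longleftrightarrow>
     ip g x l l = 0 \<and> ip g x nv nv = 0 \<and> ip g x l nv = 1 \<and>
     (\<forall>i\<in>{2..CARD('n)-1}. ip g x l (m i) = 0 \<and> ip g x nv (m i) = 0) \<and>
     (\<forall>i\<in>{2..CARD('n)-1}. \<forall>j\<in>{2..CARD('n)-1}. ip g x (m i) (m j) = (if i = j then 1 else 0))"

end

theory Submission
  imports Defs
begin

lemma line_hasderiv:
  fixes f :: "real^'n::finite \<Rightarrow> real"
  assumes "(f has_derivative D) (at (y + t *\<^sub>R v))"
  shows "((\<lambda>s. f (y + s *\<^sub>R v)) has_real_derivative D v) (at t)"
proof -
  have 1: "((\<lambda>s. y + s *\<^sub>R v) has_derivative (\<lambda>s. s *\<^sub>R v)) (at t)"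
    by (auto intro!: derivative_eq_intros)
  have 2: "((\<lambda>s. f (y + s *\<^sub>R v)) has_derivative (\<lambda>s. D (s *\<^sub>R v))) (at t)"
    using has_derivative_compose[OF 1 assms] by simp
  have lin: "linear D" using assms has_derivative_linear by blast
  have "(\<lambda>s. D (s *\<^sub>R v)) = (*) (D v)"
    by (rule ext) (simp add: linear_scale[OF lin])
  with 2 show ?thesis unfolding has_field_derivative_def by simp
qed

lemma pd_frechet:
  fixes f :: "real^'n::finite \<Rightarrow> real"
  assumes "(f has_derivative D) (at x)"
  shows "pd i f x = D (axis i 1)"
proof -
  have "((\<lambda>s. f (x + s *\<^sub>R axis i 1)) has_real_derivative D (axis i 1)) (at 0)"
    by (rule line_hasderiv) (use assms in simp)
  then show ?thesis unfolding pd_def by (rule DERIV_imp_deriv)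
qed


lemma pd_cong:
  fixes f h :: "real^'n::finite \<Rightarrow> real"
  assumes "open V" "x \<in> V" "\<And>y. y \<in> V \<Longrightarrow> f y = h y"
  shows "pd i f x = pd i h x"
proof -
  let ?p = "\<lambda>t::real. x + t *\<^sub>R axis i (1::real)"
  have c: "isCont ?p t" for t by (intro continuous_intros)
  have o: "open (?p -` V)" using continuous_open_vimage[OF assms(1) c] by simp
  have "0 \<in> ?p -` V" using assms(2) by simp
  then have ev: "eventually (\<lambda>t. ?p t \<in> V) (nhds 0)"
    using o eventually_nhds by blast
  have "eventually (\<lambda>t. f (?p t) = h (?p t)) (nhds 0)"
    by (rule eventually_mono[OF ev]) (use assms(3) in auto)
  then show ?thesis unfolding pd_def by (rule deriv_cong_ev) simp
qed

lemma pd_add: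
  fixes f h :: "real^'n::finite \<Rightarrow> real"
  assumes "f differentiable (at x)" "h differentiable (at x)"
  shows "pd i (\<lambda>y. f y + h y) x = pd i f x + pd i h x"
proof -
  obtain D1 D2 where d: "(f has_derivative D1) (at x)" "(h has_derivative D2) (at x)"
    using assms unfolding differentiable_def by blast
  show ?thesis using pd_frechet[OF has_derivative_add[OF d]] pd_frechet[OF d(1)] pd_frechet[OF d(2)]
    by simp
qed

lemma pd_diff:
  fixes f h :: "real^'n::finite \<Rightarrow> real"
  assumes "f differentiable (at x)" "h differentiable (at x)"
  shows "pd i (\<lambda>y. f y - h y) x = pd i f x - pd i h x"
proof -
  obtain D1 D2 where d: "(f has_derivative D1) (at x)" "(h has_derivative D2) (at x)"
    using assms unfolding differentiable_def by blast
  show ?thesis using pd_frechet[OF has_derivative_diff[OF d]] pd_frechet[OF d(1)] pd_frechet[OF d(2)]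
    by simp
qed

lemma pd_mult:
  fixes f h :: "real^'n::finite \<Rightarrow> real"
  assumes "f differentiable (at x)" "h differentiable (at x)"
  shows "pd i (\<lambda>y. f y * h y) x = f x * pd i h x + pd i f x * h x"
proof -
  obtain D1 D2 where d: "(f has_derivative D1) (at x)" "(h has_derivative D2) (at x)"
    using assms unfolding differentiable_def by blast
  show ?thesis using pd_frechet[OF has_derivative_mult[OF d]] pd_frechet[OF d(1)] pd_frechet[OF d(2)]
    by simp
qed

lemma pd_const: "pd i (\<lambda>y::real^'n::finite. c::real) x = 0"
  using pd_frechet[OF has_derivative_const[of c "at x"]] by simp

lemma pd_cmult:
  fixes f :: "real^'n::finite \<Rightarrow> real"
  assumes "f differentiable (at x)"
  shows "pd i (\<lambda>y. c * f y) x = c * pd i f x"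
  using pd_mult[OF differentiable_const assms, of i c] by (simp add: pd_const)

lemma pd_sum:
  fixes F :: "'c \<Rightarrow> real^'n::finite \<Rightarrow> real"
  assumes "finite S" "\<And>c. c \<in> S \<Longrightarrow> F c differentiable (at x)"
  shows "pd i (\<lambda>y. \<Sum>c\<in>S. F c y) x = (\<Sum>c\<in>S. pd i (F c) x)"
proof -
  obtain D where d: "\<And>c. c \<in> S \<Longrightarrow> (F c has_derivative D c) (at x)"
    using assms(2) unfolding differentiable_def by metis
  have "pd i (\<lambda>y. \<Sum>c\<in>S. F c y) x = (\<Sum>c\<in>S. D c (axis i 1))"
    using pd_frechet[OF has_derivative_sum[of S F D, OF d]] by simp
  also have "\<dots> = (\<Sum>c\<in>S. pd i (F c) x)"
    using pd_frechet[OF d] by simp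
  finally show ?thesis .
qed

lemma diff_on_cong:
  fixes f h :: "real^'n::finite \<Rightarrow> real"
  assumes "open U" "\<And>y. y \<in> U \<Longrightarrow> f y = h y" "f differentiable_on U"
  shows "h differentiable_on U"
  using assms unfolding differentiable_on_eq_differentiable_at[OF assms(1)] differentiable_def
  by (metis has_derivative_transform_within_open)

fun Dn :: "nat \<Rightarrow> (real^'n::finite) set \<Rightarrow> (real^'n \<Rightarrow> real) \<Rightarrow> bool" where
  "Dn 0 U f = (f differentiable_on U)"
| "Dn (Suc n) U f = (f differentiable_on U \<and> (\<forall>i. Dn n U (pd i f)))"

lemma smooth_pd: "smooth_on U f \<Longrightarrow> smooth_on U (pd i f)"
  unfolding smooth_on_def
proof
  fix xs assume "\<forall>xs. foldr pd xs f differentiable_on U"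
  then have "foldr pd (xs @ [i]) f differentiable_on U" by blast
  then show "foldr pd xs (pd i f) differentiable_on U" by simp
qed

lemma smooth_Dn: "smooth_on U f \<Longrightarrow> Dn n U f"
proof (induction n arbitrary: f)
  case 0 then show ?case unfolding smooth_on_def by (metis Dn.simps(1) foldr_Nil id_apply)
next
  case (Suc n)
  have "f differentiable_on U" using Suc.prems unfolding smooth_on_def by (metis foldr_Nil id_apply)
  moreover have "\<forall>i. Dn n U (pd i f)" using Suc.IH smooth_pd Suc.prems by blast
  ultimately show ?case by simp
qed

lemma Dn_diff_on: "Dn n U f \<Longrightarrow> f differentiable_on U"
  by (cases n) auto

lemma Dn_diff_at: "Dn n U f \<Longrightarrow> open U \<Longrightarrow> y \<in> U \<Longrightarrow> f differentiable (at y)"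
  using Dn_diff_on differentiable_on_eq_differentiable_at by blast

lemma Dn_cong: "open U \<Longrightarrow> (\<And>y. y \<in> U \<Longrightarrow> f y = h y) \<Longrightarrow> Dn n U f \<Longrightarrow> Dn n U h"
proof (induction n arbitrary: f h)
  case 0 then show ?case using diff_on_cong by auto
next
  case (Suc n)
  have e: "\<And>i y. y \<in> U \<Longrightarrow> pd i f y = pd i h y" using pd_cong[OF Suc.prems(1)] Suc.prems(2) by blast
  have "h differentiable_on U" using diff_on_cong[OF Suc.prems(1,2)] Suc.prems(3) by simp
  moreover have "Dn n U (pd i h)" for i
    using Suc.IH[OF Suc.prems(1) e] Suc.prems(3) by simp
  ultimately show ?case by simp
qed

lemma Dn_mono: "Dn (Suc n) U f \<Longrightarrow> Dn n U f"
proof (induction n arbitrary: f)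
  case 0 then show ?case by simp
next
  case (Suc n) then show ?case by simp
qed

lemma Dn_const: "Dn n (U::(real^'n::finite) set) (\<lambda>y. c)"
proof (induction n arbitrary: c)
  case 0 then show ?case by simp
next
  case (Suc n)
  have "pd i (\<lambda>y::real^'n. c) = (\<lambda>y. 0)" for i by (rule ext) (simp add: pd_const)
  then have "\<forall>i. Dn n U (pd i (\<lambda>y. c))" using Suc.IH[of 0] by simp
  then show ?case by simp
qed

lemma Dn_add: "open U \<Longrightarrow> Dn n U f \<Longrightarrow> Dn n U h \<Longrightarrow> Dn n U (\<lambda>y. f y + h y)"
proof (induction n arbitrary: f h)
  case 0 then show ?case by (simp add: differentiable_on_eq_differentiable_at)
next
  case (Suc n)
  have d: "(\<lambda>y. f y + h y) differentiable_on U"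
    using Suc.prems by (simp add: differentiable_on_eq_differentiable_at)
  have "Dn n U (pd i (\<lambda>y. f y + h y))" for i
  proof (rule Dn_cong[OF Suc.prems(1)])
    show "Dn n U (\<lambda>y. pd i f y + pd i h y)" using Suc by simp
    show "pd i f y + pd i h y = pd i (\<lambda>y. f y + h y) y" if "y \<in> U" for y
      using pd_add[of f y h i] Dn_diff_at[OF Suc.prems(2,1) that] Dn_diff_at[OF Suc.prems(3,1) that]
      by simp
  qed
  then show ?case using d by simp
qed

lemma Dn_mult: "open U \<Longrightarrow> Dn n U f \<Longrightarrow> Dn n U h \<Longrightarrow> Dn n U (\<lambda>y. f y * h y)"
proof (induction n arbitrary: f h)
  case 0 then show ?case by (simp add: differentiable_on_eq_differentiable_at)
next
  case (Suc n)
  have d: "(\<lambda>y. f y * h y) differentiable_on U"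
    using Suc.prems by (simp add: differentiable_on_eq_differentiable_at)
  have "Dn n U (pd i (\<lambda>y. f y * h y))" for i
  proof (rule Dn_cong[OF Suc.prems(1)])
    show "Dn n U (\<lambda>y. f y * pd i h y + pd i f y * h y)"
    proof -
      have a: "Dn n U f" "Dn n U h" using Suc.prems Dn_mono[of n U f] Dn_mono[of n U h] by auto
      have b: "Dn n U (pd i f)" "Dn n U (pd i h)" using Suc.prems by auto
      show ?thesis using Dn_add[OF Suc.prems(1) Suc.IH[OF Suc.prems(1) a(1) b(2)] Suc.IH[OF Suc.prems(1) b(1) a(2)]] .
    qed
    show "f y * pd i h y + pd i f y * h y = pd i (\<lambda>y. f y * h y) y" if "y \<in> U" for y
      using pd_mult[of f y h i] Dn_diff_at[OF Suc.prems(2,1) that] Dn_diff_at[OF Suc.prems(3,1) that]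
      by simp
  qed
  then show ?case using d by simp
qed

lemma Dn_sum:
  assumes "open U" "finite S" "\<And>c. c \<in> S \<Longrightarrow> Dn n U (F c)"
  shows "Dn n U (\<lambda>y. \<Sum>c\<in>S. F c y)"
  using assms(2,3)
proof (induction S rule: finite_induct)
  case empty then show ?case using Dn_const[of n U 0] by simp
next
  case (insert a S)
  then show ?case using Dn_add[OF assms(1), of n "F a" "\<lambda>y. \<Sum>c\<in>S. F c y"] by simp
qed

lemma Dn_cmult: "open U \<Longrightarrow> Dn n U f \<Longrightarrow> Dn n U (\<lambda>y. c * f y)"
  using Dn_mult[OF _ Dn_const] by blast

lemma Dn_diff: "open U \<Longrightarrow> Dn n U f \<Longrightarrow> Dn n U h \<Longrightarrow> Dn n U (\<lambda>y. f y - h y)"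
  using Dn_add[of U n f "\<lambda>y. (-1) * h y"] Dn_cmult[of U n h "-1"] by simp

lemma Dn_pd: "Dn (Suc n) U f \<Longrightarrow> Dn n U (pd i f)"
  by simp


lemma line_pd:
  fixes f :: "real^'n::finite \<Rightarrow> real"
  assumes "f differentiable (at (y + t *\<^sub>R axis i 1))"
  shows "((\<lambda>s. f (y + s *\<^sub>R axis i 1)) has_real_derivative pd i f (y + t *\<^sub>R axis i 1)) (at t)"
proof -
  obtain D where d: "(f has_derivative D) (at (y + t *\<^sub>R axis i 1))"
    using assms unfolding differentiable_def by blast
  show ?thesis using line_hasderiv[OF d] pd_frechet[OF d] by simp
qed

lemma schwarz_aux:
  fixes f :: "real^'n::finite \<Rightarrow> real"
  assumes U: "open U" and f: "f differentiable_on U" and fi: "pd i f differentiable_on U"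
    and h: "0 < h"
    and inU: "\<And>s t. 0 \<le> s \<Longrightarrow> s \<le> h \<Longrightarrow> 0 \<le> t \<Longrightarrow> t \<le> h \<Longrightarrow>
        x + s *\<^sub>R axis i 1 + t *\<^sub>R axis j 1 \<in> U"
  shows "\<exists>s t. 0 < s \<and> s < h \<and> 0 < t \<and> t < h \<and>
    f (x + h *\<^sub>R axis i 1 + h *\<^sub>R axis j 1) - f (x + h *\<^sub>R axis i 1)
      - f (x + h *\<^sub>R axis j 1) + f x = h * h * pd j (pd i f) (x + s *\<^sub>R axis i 1 + t *\<^sub>R axis j 1)"
proof -
  let ?a = "axis i (1::real)" and ?b = "axis j (1::real)"
  define \<phi> where "\<phi> t = f ((x + h *\<^sub>R ?b) + t *\<^sub>R ?a) - f (x + t *\<^sub>R ?a)" for t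
  have fd: "f differentiable (at y)" if "y \<in> U" for y
    using f U that differentiable_on_eq_differentiable_at by blast
  have fid: "pd i f differentiable (at y)" if "y \<in> U" for y
    using fi U that differentiable_on_eq_differentiable_at by blast
  define \<phi>' where "\<phi>' t = pd i f ((x + h *\<^sub>R ?b) + t *\<^sub>R ?a) - pd i f (x + t *\<^sub>R ?a)" for t
  have der1: "DERIV \<phi> t :> \<phi>' t"
    if "0 \<le> t" "t \<le> h" for t
  proof -
    have p1: "(x + h *\<^sub>R ?b) + t *\<^sub>R ?a \<in> U" using inU[of t h] that h by (simp add: algebra_simps)
    have p2: "x + t *\<^sub>R ?a \<in> U" using inU[of t 0] that h by simp
    show ?thesis unfolding \<phi>_def \<phi>'_def
      by (intro DERIV_diff line_pd fd p1 p2)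
  qed
  then obtain t1 where t1: "0 < t1" "t1 < h"
    "\<phi> h - \<phi> 0 = (h - 0) * (pd i f ((x + h *\<^sub>R ?b) + t1 *\<^sub>R ?a) - pd i f (x + t1 *\<^sub>R ?a))"
    using MVT2[OF h, of \<phi> \<phi>', OF der1] unfolding \<phi>'_def by auto
  define \<psi> where "\<psi> s = pd i f ((x + t1 *\<^sub>R ?a) + s *\<^sub>R ?b)" for s
  define \<psi>' where "\<psi>' s = pd j (pd i f) ((x + t1 *\<^sub>R ?a) + s *\<^sub>R ?b)" for s
  have der2: "DERIV \<psi> s :> \<psi>' s" if "0 \<le> s" "s \<le> h" for s
  proof -
    have p1: "(x + t1 *\<^sub>R ?a) + s *\<^sub>R ?b \<in> U" using inU[of t1 s] that t1 by simp
    show ?thesis unfolding \<psi>_def \<psi>'_def by (intro line_pd fid p1)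
  qed
  then obtain s1 where s1: "0 < s1" "s1 < h"
    "\<psi> h - \<psi> 0 = (h - 0) * pd j (pd i f) ((x + t1 *\<^sub>R ?a) + s1 *\<^sub>R ?b)"
    using MVT2[OF h, of \<psi> \<psi>', OF der2] unfolding \<psi>'_def by auto
  have A: "pd i f ((x + h *\<^sub>R ?b) + t1 *\<^sub>R ?a) - pd i f (x + t1 *\<^sub>R ?a) = \<psi> h - \<psi> 0"
    unfolding \<psi>_def by (simp add: add_ac)
  have B: "\<phi> h - \<phi> 0 = h * (h * \<psi>' s1)"
    using t1(3) s1(3) unfolding A \<psi>'_def by simp
  have C: "\<phi> h - \<phi> 0 = f (x + h *\<^sub>R ?a + h *\<^sub>R ?b) - f (x + h *\<^sub>R ?a) - f (x + h *\<^sub>R ?b) + f x"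
    unfolding \<phi>_def by (simp add: add_ac)
  have "f (x + h *\<^sub>R ?a + h *\<^sub>R ?b) - f (x + h *\<^sub>R ?a) - f (x + h *\<^sub>R ?b) + f x
     = h * h * pd j (pd i f) (x + t1 *\<^sub>R ?a + s1 *\<^sub>R ?b)"
    using B C unfolding \<psi>'_def by (simp add: add_ac)
  then show ?thesis using t1 s1 by blast
qed

lemma schwarz:
  fixes f :: "real^'n::finite \<Rightarrow> real"
  assumes U: "open U" and x: "x \<in> U" and f: "Dn 2 U f"
  shows "pd i (pd j f) x = pd j (pd i f) x"
proof (rule ccontr)
  assume ne: "pd i (pd j f) x \<noteq> pd j (pd i f) x"
  define \<epsilon> where "\<epsilon> = \<bar>pd i (pd j f) x - pd j (pd i f) x\<bar>"
  have ep: "\<epsilon> > 0" using ne unfolding \<epsilon>_def by simp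
  have f2: "Dn 2 U f" by fact
  then have fd: "f differentiable_on U" and fi: "pd i f differentiable_on U" and fj: "pd j f differentiable_on U"
    and fij: "pd j (pd i f) differentiable_on U" and fji: "pd i (pd j f) differentiable_on U"
    by (auto simp: numeral_2_eq_2 intro: Dn_diff_on)
  have c1: "continuous (at x) (pd j (pd i f))"
    using fij U x differentiable_on_eq_differentiable_at differentiable_imp_continuous_within by blast
  have c2: "continuous (at x) (pd i (pd j f))"
    using fji U x differentiable_on_eq_differentiable_at differentiable_imp_continuous_within by blast
  obtain d1 where d1: "d1 > 0" "\<And>y. dist y x < d1 \<Longrightarrow> dist (pd j (pd i f) y) (pd j (pd i f) x) < \<epsilon>/2"
    using c1 ep unfolding continuous_at_eps_delta by (metis half_gt_zero)
  obtain d2 where d2: "d2 > 0" "\<And>y. dist y x < d2 \<Longrightarrow> dist (pd i (pd j f) y) (pd i (pd j f) x) < \<epsilon>/2"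
    using c2 ep unfolding continuous_at_eps_delta by (metis half_gt_zero)
  obtain r where r: "r > 0" "ball x r \<subseteq> U" using U x open_contains_ball by blast
  define h where "h = min (min d1 d2) r / 4"
  have h: "h > 0" using d1 d2 r unfolding h_def by simp
  have close: "dist (x + s *\<^sub>R axis k 1 + t *\<^sub>R axis k' 1) x < min (min d1 d2) r"
    if "0 \<le> s" "s \<le> h" "0 \<le> t" "t \<le> h" for s t k k'
  proof -
    have "dist (x + s *\<^sub>R axis k 1 + t *\<^sub>R axis k' 1) x = norm (s *\<^sub>R axis k (1::real) + t *\<^sub>R axis k' 1)"
      by (simp add: dist_norm)
    also have "\<dots> \<le> norm (s *\<^sub>R axis k (1::real)) + norm (t *\<^sub>R axis k' (1::real))" by (rule norm_triangle_ineq)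
    also have "\<dots> = s + t" using that by simp
    also have "\<dots> < min (min d1 d2) r" using that h unfolding h_def by simp
    finally show ?thesis .
  qed
  have inU: "x + s *\<^sub>R axis k 1 + t *\<^sub>R axis k' 1 \<in> U"
    if "0 \<le> s" "s \<le> h" "0 \<le> t" "t \<le> h" for s t k k'
    using close[OF that, of k k'] r(2) by (auto simp: dist_commute)
  obtain s t where st: "0 < s" "s < h" "0 < t" "t < h"
    "f (x + h *\<^sub>R axis i 1 + h *\<^sub>R axis j 1) - f (x + h *\<^sub>R axis i 1)
      - f (x + h *\<^sub>R axis j 1) + f x = h * h * pd j (pd i f) (x + s *\<^sub>R axis i 1 + t *\<^sub>R axis j 1)"
    using schwarz_aux[OF U fd fi h inU] by blast
  obtain s' t' where st': "0 < s'" "s' < h" "0 < t'" "t' < h"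
    "f (x + h *\<^sub>R axis j 1 + h *\<^sub>R axis i 1) - f (x + h *\<^sub>R axis j 1)
      - f (x + h *\<^sub>R axis i 1) + f x = h * h * pd i (pd j f) (x + s' *\<^sub>R axis j 1 + t' *\<^sub>R axis i 1)"
    using schwarz_aux[OF U fd fj h inU] by blast
  have eq: "pd j (pd i f) (x + s *\<^sub>R axis i 1 + t *\<^sub>R axis j 1) = pd i (pd j f) (x + s' *\<^sub>R axis j 1 + t' *\<^sub>R axis i 1)"
    using st(5) st'(5) h by (simp add: algebra_simps)
  have a1: "dist (pd j (pd i f) (x + s *\<^sub>R axis i 1 + t *\<^sub>R axis j 1)) (pd j (pd i f) x) < \<epsilon>/2"
    using d1(2) close[of s t i j] st by auto
  have a2: "dist (pd i (pd j f) (x + s' *\<^sub>R axis j 1 + t' *\<^sub>R axis i 1)) (pd i (pd j f) x) < \<epsilon>/2"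
    using d2(2) close[of s' t' j i] st' by auto
  have "\<bar>pd i (pd j f) x - pd j (pd i f) x\<bar> < \<epsilon>" using a1 a2 eq unfolding dist_real_def by arith
  then have "\<epsilon> < \<epsilon>" unfolding \<epsilon>_def .
  then show False by simp
qed


lemma matrix_inv_props:
  fixes A :: "real^'n::finite^'n"
  assumes "invertible A"
  shows "A ** matrix_inv A = mat 1" "matrix_inv A ** A = mat 1"
proof -
  have "\<exists>A'. A ** A' = mat 1 \<and> A' ** A = mat 1" using assms unfolding invertible_def by blast
  then have "A ** matrix_inv A = mat 1 \<and> matrix_inv A ** A = mat 1"
    unfolding matrix_inv_def by (rule someI_ex)
  then show "A ** matrix_inv A = mat 1" "matrix_inv A ** A = mat 1" by auto
qed

lemma matrix_inv_entry:
  fixes A :: "real^'n::finite^'n"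
  assumes "invertible A"
  shows "matrix_inv A $ i $ j = det (\<chi> r c. if c = i then (if r = j then 1 else 0) else A$r$c) / det A"
proof -
  let ?x = "matrix_inv A *v axis j 1"
  have "A *v ?x = axis j 1"
    by (simp add: matrix_vector_mul_assoc matrix_inv_props(1)[OF assms])
  moreover have d: "det A \<noteq> 0" using assms invertible_det_nz by blast
  ultimately have "?x = (\<chi> k. det(\<chi> r c. if c=k then (axis j 1)$r else A$r$c) / det A)"
    using cramer[OF d] by blast
  then have "?x $ i = det(\<chi> r c. if c=i then (axis j 1)$r else A$r$c) / det A" by simp
  moreover have "?x $ i = matrix_inv A $ i $ j"
    by (simp add: matrix_vector_mult_def axis_def if_distrib cong: if_cong)
  moreover have "(\<chi> r c. if c=i then (axis j (1::real))$r else A$r$c) = (\<chi> r c. if c = i then (if r = j then 1 else 0) else A$r$c)"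
    by (intro arg_cong[where f=vec_lambda] ext) (simp add: axis_def)
  ultimately show ?thesis by simp
qed

lemma differentiable_prod':
  fixes f :: "'i \<Rightarrow> 'a::real_normed_vector \<Rightarrow> 'b::real_normed_field"
  assumes "\<And>i. i \<in> I \<Longrightarrow> f i differentiable (at x)"
  shows "(\<lambda>x. \<Prod>i\<in>I. f i x) differentiable (at x)"
proof -
  obtain D where "\<And>i. i \<in> I \<Longrightarrow> (f i has_derivative D i) (at x)"
    using assms unfolding differentiable_def by metis
  then show ?thesis unfolding differentiable_def using has_derivative_prod by blast
qed

lemma det_differentiable:
  fixes M :: "'m::real_normed_vector \<Rightarrow> real^'n::finite^'n" 
  assumes "\<And>a b. (\<lambda>y. M y $ a $ b) differentiable (at x)"
  shows "(\<lambda>y. det (M y)) differentiable (at x)"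
  unfolding det_def
  by (intro differentiable_sum ballI differentiable_mult differentiable_const differentiable_prod'
       finite_class.finite_UNIV finite_permutations assms)


lemma lor_props:
  fixes G :: "real^'n::finite^'n"
  assumes "lorentzian_matrix G"
  shows "invertible G" "transpose G = G"
proof -
  obtain P :: "real^'n^'n" and k where P: "invertible P"
    "transpose P ** G ** P = (\<chi> a b. if a = b then (if a = k then -1 else 1) else 0)"
    using assms unfolding lorentzian_matrix_def by blast
  let ?D = "(\<chi> a b. if a = b then (if a = k then -1 else 1) else 0) :: real^'n^'n"
  have "det ?D = (\<Prod>i\<in>UNIV. ?D $ i $ i)" by (rule det_diagonal) simp
  also have "\<dots> \<noteq> 0" by (simp add: prod_zero_iff)
  finally have "det ?D \<noteq> 0" .
  then have "det (transpose P ** G ** P) \<noteq> 0" using P(2) by simp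
  then have "det (transpose P) * det G * det P \<noteq> 0" by (simp add: det_mul)
  then have "det G \<noteq> 0" by auto
  then show "invertible G" using invertible_det_nz by blast
  show "transpose G = G" using assms unfolding lorentzian_matrix_def by blast
qed

lemma inv_sym:
  fixes G :: "real^'n::finite^'n"
  assumes "invertible G" "transpose G = G"
  shows "transpose (matrix_inv G) = matrix_inv G"
proof -
  let ?H = "matrix_inv G"
  have 1: "G ** ?H = mat 1" "?H ** G = mat 1" using matrix_inv_props[OF assms(1)] by auto
  have "transpose ?H ** G = mat 1"
    using arg_cong[OF 1(1), of transpose] assms(2) by (simp add: matrix_transpose_mul)
  then have "transpose ?H = transpose ?H ** (G ** ?H)" using 1 by simp
  also have "\<dots> = ?H" by (simp add: matrix_mul_assoc \<open>transpose ?H ** G = mat 1\<close>)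
  finally show ?thesis .
qed

locale kundt =
  fixes U :: "(real^'n::finite) set"
    and g :: "real^'n \<Rightarrow> real^'n^'n"
    and l nv :: "real^'n \<Rightarrow> real^'n"
    and m :: "nat \<Rightarrow> real^'n \<Rightarrow> real^'n"
  assumes dim: "CARD('n) \<ge> 4"
    and U_open: "open U"
    and g_smooth: "\<And>a b. smooth_on U (\<lambda>x. g x $ a $ b)"
    and g_lor: "\<And>x. x \<in> U \<Longrightarrow> lorentzian_matrix (g x)"
    and l_smooth: "\<And>a. smooth_on U (\<lambda>x. l x $ a)"
    and frame: "\<And>x. x \<in> U \<Longrightarrow> null_frame g x (l x) (nv x) (\<lambda>i. m i x)"
    and kundt_i0: "\<And>x i. x \<in> U \<Longrightarrow> i \<in> {2..CARD('n)-1} \<Longrightarrow>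
                      contr2 (\<lambda>a b. cov_low g l a b x) (m i x) (l x) = 0"
    and kundt_ij: "\<And>x i j. x \<in> U \<Longrightarrow> i \<in> {2..CARD('n)-1} \<Longrightarrow> j \<in> {2..CARD('n)-1} \<Longrightarrow>
                      contr2 (\<lambda>a b. cov_low g l a b x) (m i x) (m j x) = 0"
    and R00: "\<And>x. x \<in> U \<Longrightarrow> contr2 (\<lambda>a b. Ric g a b x) (l x) (l x) = 0"
    and R0i: "\<And>x i. x \<in> U \<Longrightarrow> i \<in> {2..CARD('n)-1} \<Longrightarrow>
                 contr2 (\<lambda>a b. Ric g a b x) (l x) (m i x) = 0"
begin

abbreviation "lo a \<equiv> (\<lambda>y. \<Sum>c\<in>UNIV. g y $ a $ c * l y $ c)"

lemma g_inv: "y \<in> U \<Longrightarrow> invertible (g y)" using lor_props g_lor by blast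

lemma Gsym: "y \<in> U \<Longrightarrow> g y $ a $ b = g y $ b $ a"
proof -
  assume y: "y \<in> U"
  have "g y $ a $ b = transpose (g y) $ a $ b" using lor_props(2)[OF g_lor[OF y]] by simp
  also have "\<dots> = g y $ b $ a" by (simp add: transpose_def)
  finally show ?thesis .
qed

lemma Hsym: "y \<in> U \<Longrightarrow> ginv g y $ a $ b = ginv g y $ b $ a"
proof -
  assume y: "y \<in> U"
  have "ginv g y $ a $ b = transpose (ginv g y) $ a $ b"
    using inv_sym[OF g_inv[OF y] lor_props(2)[OF g_lor[OF y]]] unfolding ginv_def by simp
  also have "\<dots> = ginv g y $ b $ a" by (simp add: transpose_def)
  finally show ?thesis .
qed

lemma GH: "y \<in> U \<Longrightarrow> (\<Sum>c\<in>UNIV. g y $ a $ c * ginv g y $ c $ b) = (if a = b then 1 else 0)"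
proof -
  assume y: "y \<in> U"
  have "(g y ** ginv g y) $ a $ b = mat 1 $ a $ b" using matrix_inv_props(1)[OF g_inv[OF y]] unfolding ginv_def by simp
  then show ?thesis by (simp add: matrix_matrix_mult_def mat_def)
qed

lemma HG: "y \<in> U \<Longrightarrow> (\<Sum>c\<in>UNIV. ginv g y $ a $ c * g y $ c $ b) = (if a = b then 1 else 0)"
proof -
  assume y: "y \<in> U"
  have "(ginv g y ** g y) $ a $ b = mat 1 $ a $ b" using matrix_inv_props(2)[OF g_inv[OF y]] unfolding ginv_def by simp
  then show ?thesis by (simp add: matrix_matrix_mult_def mat_def)
qed

lemma G_Dn: "Dn n U (\<lambda>y. g y $ a $ b)" using smooth_Dn g_smooth by blast
lemma l_Dn: "Dn n U (\<lambda>y. l y $ a)" using smooth_Dn l_smooth by blast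

lemma lo_Dn: "Dn n U (lo a)"
  by (rule Dn_sum[OF U_open finite_class.finite_UNIV]) (rule Dn_mult[OF U_open G_Dn l_Dn])

lemma Dn_pd_diff: "Dn (Suc n) U f \<Longrightarrow> y \<in> U \<Longrightarrow> pd i f differentiable (at y)"
  using Dn_diff_at[OF _ U_open] by auto

lemma G_diff: "y \<in> U \<Longrightarrow> (\<lambda>y. g y $ a $ b) differentiable (at y)"
  using Dn_diff_at[OF G_Dn U_open] by blast
lemma l_diff: "y \<in> U \<Longrightarrow> (\<lambda>y. l y $ a) differentiable (at y)"
  using Dn_diff_at[OF l_Dn U_open] by blast
lemma lo_diff: "y \<in> U \<Longrightarrow> lo a differentiable (at y)"
  using Dn_diff_at[OF lo_Dn U_open] by blast
lemma dG_diff: "y \<in> U \<Longrightarrow> pd k (\<lambda>y. g y $ a $ b) differentiable (at y)"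
  using Dn_pd_diff[OF G_Dn] by blast
lemma dlo_diff: "y \<in> U \<Longrightarrow> pd k (lo a) differentiable (at y)"
  using Dn_pd_diff[OF lo_Dn] by blast

lemma H_diff:
  assumes y0: "y0 \<in> U"
  shows "(\<lambda>y. ginv g y $ a $ b) differentiable (at y0)"
proof -
  define F where "F y = det (\<chi> r c. if c = a then (if r = b then 1 else 0) else g y $ r $ c) / det (g y)" for y
  have "F differentiable (at y0)"
    unfolding F_def
  proof (intro differentiable_divide det_differentiable)
    show "(\<lambda>y. (\<chi> r c. if c = a then (if r = b then 1 else 0) else g y $ r $ c) $ r $ c) differentiable (at y0)" for r c
      by (cases "c = a") (auto intro: G_diff[OF y0])
    show "(\<lambda>y. g y $ r $ c) differentiable (at y0)" for r c using G_diff[OF y0] .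
    show "det (g y0) \<noteq> 0" using g_inv[OF y0] invertible_det_nz by blast
  qed
  moreover have "F y = ginv g y $ a $ b" if "y \<in> U" for y
    unfolding F_def ginv_def using matrix_inv_entry[OF g_inv[OF that]] by simp
  ultimately show ?thesis unfolding differentiable_def
    using has_derivative_transform_within_open[OF _ U_open y0, of F _ UNIV "\<lambda>y. ginv g y $ a $ b"] by blast
qed

lemma dG_sym: "y \<in> U \<Longrightarrow> pd k (\<lambda>y. g y $ a $ b) y = pd k (\<lambda>y. g y $ b $ a) y"
  by (rule pd_cong[OF U_open]) (auto intro: Gsym)

lemma ddG_sym: "y \<in> U \<Longrightarrow> pd k (pd k' (\<lambda>y. g y $ a $ b)) y = pd k (pd k' (\<lambda>y. g y $ b $ a)) y"
proof -
  assume y: "y \<in> U"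
  show ?thesis by (rule pd_cong[OF U_open y]) (use dG_sym in blast)
qed

lemma Gamma_diff: "y \<in> U \<Longrightarrow> (\<lambda>y. Gamma g a b c y) differentiable (at y)"
  unfolding Gamma_def
  by (intro differentiable_mult differentiable_const differentiable_sum finite_class.finite_UNIV ballI
      differentiable_add differentiable_diff H_diff dG_diff) 

lemma Gamma_sym: "y \<in> U \<Longrightarrow> Gamma g a b c y = Gamma g a c b y"
proof -
  assume y: "y \<in> U"
  have "pd d (\<lambda>y. g y $ b $ c) y = pd d (\<lambda>y. g y $ c $ b) y" for d using dG_sym[OF y] .
  then show ?thesis unfolding Gamma_def by (simp add: add.commute)
qed

lemma dGamma_sym: "y \<in> U \<Longrightarrow> pd k (\<lambda>y. Gamma g a b c y) y = pd k (\<lambda>y. Gamma g a c b y) y"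
  by (rule pd_cong[OF U_open]) (auto intro: Gamma_sym)

lemma L_diff: "y \<in> U \<Longrightarrow> (\<lambda>y. cov_low g l a b y) differentiable (at y)"
  unfolding cov_low_def
  by (intro differentiable_mult differentiable_sum finite_class.finite_UNIV ballI
      differentiable_diff dlo_diff Gamma_diff lo_diff)

end


lemma ip_add_right: "ip g y u (v + w) = ip g y u v + ip g y u w"
  unfolding ip_def by (simp add: distrib_left sum.distrib)

lemma ip_scale_right: "ip g y u (c *\<^sub>R v) = c * ip g y u v"
  unfolding ip_def by (simp add: sum_distrib_left mult_ac)

lemma ip_diff_right: "ip g y u (v - w) = ip g y u v - ip g y u w"
  unfolding ip_def by (simp add: right_diff_distrib sum_subtractf)

lemma ip_zero_right: "ip g y u 0 = 0"
  unfolding ip_def by simp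

lemma ip_sum_right: "ip g y u (\<Sum>k\<in>S. f k) = (\<Sum>k\<in>S. ip g y u (f k))"
proof (cases "finite S")
  case True then show ?thesis
    by (induction S rule: finite_induct) (simp_all add: ip_zero_right ip_add_right)
next
  case False then show ?thesis by (simp add: ip_zero_right)
qed

lemma ip_sym:
  assumes "\<And>a b. g y $ a $ b = g y $ b $ a"
  shows "ip g y u v = ip g y v u"
  unfolding ip_def
  by (subst sum.swap) (simp add: assms mult_ac)

lemma frame_complete:
  fixes g :: "real^'n::finite \<Rightarrow> real^'n^'n"
  assumes sym: "\<And>a b. g y $ a $ b = g y $ b $ a"
    and fr: "null_frame g y l n m"
    and dim: "CARD('n) \<ge> 4"
  shows "P = ip g y n P *\<^sub>R l + ip g y l P *\<^sub>R n + (\<Sum>i\<in>{2..CARD('n)-1}. ip g y (m i) P *\<^sub>R m i)"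
proof (rule ccontr)
  let ?I = "{2..CARD('n)-1}"
  let ?ip = "ip g y"
  have ll: "?ip l l = 0" and nn: "?ip n n = 0" and ln: "?ip l n = 1"
    and lm: "\<And>i. i \<in> ?I \<Longrightarrow> ?ip l (m i) = 0" and nm: "\<And>i. i \<in> ?I \<Longrightarrow> ?ip n (m i) = 0"
    and mm: "\<And>i j. i \<in> ?I \<Longrightarrow> j \<in> ?I \<Longrightarrow> ?ip (m i) (m j) = (if i = j then 1 else 0)"
    using fr unfolding null_frame_def by auto
  have ipsym: "?ip u v = ?ip v u" for u v using ip_sym[of g y, OF sym] .
  have nl: "?ip n l = 1" using ln ipsym by simp
  have ml: "\<And>i. i \<in> ?I \<Longrightarrow> ?ip (m i) l = 0" and mn: "\<And>i. i \<in> ?I \<Longrightarrow> ?ip (m i) n = 0"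
    using lm nm ipsym by auto
  define Q where "Q = P - (?ip n P *\<^sub>R l + ?ip l P *\<^sub>R n + (\<Sum>i\<in>?I. ?ip (m i) P *\<^sub>R m i))"
  assume "P \<noteq> ip g y n P *\<^sub>R l + ip g y l P *\<^sub>R n + (\<Sum>i\<in>{2..CARD('n)-1}. ip g y (m i) P *\<^sub>R m i)"
  then have Q0: "Q \<noteq> 0" unfolding Q_def by simp
  have ipQ: "?ip w Q = ?ip w P - (?ip n P * ?ip w l + ?ip l P * ?ip w n + (\<Sum>i\<in>?I. ?ip (m i) P * ?ip w (m i)))" for w
    unfolding Q_def by (simp add: ip_diff_right ip_add_right ip_scale_right ip_sum_right)
  have lQ: "?ip l Q = 0" unfolding ipQ using ll ln lm by simp
  have nQ: "?ip n Q = 0" unfolding ipQ using nl nn nm by simp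
  have mQ: "?ip (m j) Q = 0" if j: "j \<in> ?I" for j
  proof -
    have "(\<Sum>i\<in>?I. ?ip (m i) P * ?ip (m j) (m i)) = (\<Sum>i\<in>?I. if i = j then ?ip (m i) P else 0)"
      by (rule sum.cong) (use mm j in auto)
    also have "\<dots> = ?ip (m j) P" using j by simp
    finally show ?thesis unfolding ipQ using ml[OF j] mn[OF j] ipsym by simp
  qed
  have injm: "inj_on m ?I"
  proof (rule inj_onI)
    fix i j assume "i \<in> ?I" "j \<in> ?I" "m i = m j"
    then show "i = j" using mm[of i j] mm[of i i] by (auto split: if_splits)
  qed
  define S where "S = insert Q (insert l (insert n (m ` ?I)))"
  have finS: "finite S" unfolding S_def by simp
  have dual: "\<exists>w. (\<forall>v\<in>S. ?ip w v = (if v = v0 then 1 else 0))" if "v0 \<in> S" "v0 \<noteq> Q" for v0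
  proof -
    have "v0 = l \<or> v0 = n \<or> (\<exists>j\<in>?I. v0 = m j)" using that unfolding S_def by auto
    then show ?thesis
    proof (elim disjE bexE)
      assume v0: "v0 = l"
      show ?thesis
      proof (intro exI[of _ n] ballI)
        fix v assume "v \<in> S"
        then show "?ip n v = (if v = v0 then 1 else 0)" unfolding S_def v0
          using nQ nl nn nm by (auto simp: Q0)
      qed
    next
      assume v0: "v0 = n"
      show ?thesis
      proof (intro exI[of _ l] ballI)
        fix v assume "v \<in> S"
        then show "?ip l v = (if v = v0 then 1 else 0)" unfolding S_def v0
          using lQ ll ln lm by auto
      qed
    next
      fix j assume j: "j \<in> ?I" and v0: "v0 = m j"
      show ?thesis
      proof (intro exI[of _ "m j"] ballI)
        fix v assume "v \<in> S"
        then show "?ip (m j) v = (if v = v0 then 1 else 0)" unfolding S_def v0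
          using mQ[OF j] ml[OF j] mn[OF j] mm[OF j] mm[OF j j] by auto
      qed
    qed
  qed
  have indep: "independent S"
  proof (rule independent_if_scalars_zero[OF finS])
    fix f v assume sum0: "(\<Sum>x\<in>S. f x *\<^sub>R x) = 0" and v: "v \<in> S"
    have other: "f v0 = 0" if v0S: "v0 \<in> S" "v0 \<noteq> Q" for v0
    proof -
      obtain w where w: "\<forall>v\<in>S. ?ip w v = (if v = v0 then 1 else 0)" using dual[OF v0S] by blast
      have "0 = ?ip w (\<Sum>x\<in>S. f x *\<^sub>R x)" using sum0 by (simp add: ip_zero_right)
      also have "\<dots> = (\<Sum>x\<in>S. f x * ?ip w x)" by (simp add: ip_sum_right ip_scale_right)
      also have "\<dots> = (\<Sum>x\<in>S. if x = v0 then f x else 0)" by (rule sum.cong) (use w in auto)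
      also have "\<dots> = f v0" using v0S finS by simp
      finally show ?thesis by simp
    qed
    have QS: "Q \<in> S" unfolding S_def by simp
    have "(\<Sum>x\<in>S. f x *\<^sub>R x) = (\<Sum>x\<in>S. if x = Q then f x *\<^sub>R x else 0)"
      by (rule sum.cong) (use other in auto)
    also have "\<dots> = f Q *\<^sub>R Q" using QS finS by simp
    finally have "f Q = 0" using sum0 Q0 by simp
    then show "f v = 0" using other[OF v] by blast
  qed
  have Qm: "Q \<noteq> m i" if "i \<in> ?I" for i
  proof
    assume "Q = m i"
    then show False using mQ[OF that] mm[OF that that] by simp
  qed
  have "Q \<noteq> l" using nQ nl by auto
  moreover have "Q \<noteq> n" using lQ ln by auto
  moreover have "Q \<notin> m ` ?I" using Qm by blast
  ultimately have QnS: "Q \<notin> insert l (insert n (m ` ?I))" by simp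
  have lnS: "l \<notin> insert n (m ` ?I)" using nl nn nm by auto
  have nnS: "n \<notin> m ` ?I" using ln lm by auto
  have "card S = card ?I + 3"
    unfolding S_def using QnS lnS nnS card_image[OF injm] by simp
  also have "card ?I = CARD('n) - 2" using dim by simp
  finally have "card S = CARD('n) + 1" using dim by simp
  moreover have "card S \<le> CARD('n)" using independent_bound[OF indep] by simp
  ultimately show False by simp
qed


lemma contract_inv:
  fixes G H :: "'n::finite \<Rightarrow> 'n \<Rightarrow> real"
  assumes Gs: "\<And>a b. G a b = G b a"
    and GH: "\<And>a b. (\<Sum>c\<in>UNIV. G a c * H c b) = (if a = b then 1 else 0)"
  shows "(\<Sum>c\<in>UNIV. (\<Sum>d\<in>UNIV. H c d * X d) * (\<Sum>e\<in>UNIV. G c e * Y e)) = (\<Sum>d\<in>UNIV. X d * Y d)"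
proof -
  have "(\<Sum>c\<in>UNIV. (\<Sum>d\<in>UNIV. H c d * X d) * (\<Sum>e\<in>UNIV. G c e * Y e))
      = (\<Sum>c\<in>UNIV. \<Sum>e\<in>UNIV. \<Sum>d\<in>UNIV. (G c e * H c d) * (X d * Y e))"
    by (simp add: sum_distrib_left sum_distrib_right mult_ac)
  also have "\<dots> = (\<Sum>e\<in>UNIV. \<Sum>c\<in>UNIV. \<Sum>d\<in>UNIV. (G c e * H c d) * (X d * Y e))"
    by (rule sum.swap)
  also have "\<dots> = (\<Sum>e\<in>UNIV. \<Sum>d\<in>UNIV. \<Sum>c\<in>UNIV. (G e c * H c d) * (X d * Y e))"
    by (rule sum.cong[OF refl], subst sum.swap) (simp add: Gs)
  also have "\<dots> = (\<Sum>d\<in>UNIV. \<Sum>e\<in>UNIV. \<Sum>c\<in>UNIV. (G e c * H c d) * (X d * Y e))"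
    by (rule sum.swap)
  also have "\<dots> = (\<Sum>d\<in>UNIV. \<Sum>e\<in>UNIV. (if e = d then 1 else 0) * (X d * Y e))"
    by (simp add: sum_distrib_right[symmetric] GH)
  also have "\<dots> = (\<Sum>d\<in>UNIV. \<Sum>e\<in>UNIV. (if e = d then X d * Y e else 0))"
    by (intro sum.cong refl) simp
  also have "\<dots> = (\<Sum>d\<in>UNIV. X d * Y d)"
    by simp
  finally show ?thesis .
qed

lemma sum_lin_diff: "(\<Sum>a\<in>S. f a * (A a - c * B a)) = (\<Sum>a\<in>S. f a * A a) - c * (\<Sum>a\<in>S. f a * (B a::real))"
  by (simp add: right_diff_distrib sum_subtractf sum_distrib_left mult_ac)

context kundt begin

lemma dlo_eq: "y \<in> U \<Longrightarrow> pd k (lo a) y = (\<Sum>c\<in>UNIV. g y $ a $ c * pd k (\<lambda>y. l y $ c) y + pd k (\<lambda>y. g y $ a $ c) y * l y $ c)"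
  by (subst pd_sum) (auto intro!: differentiable_mult G_diff l_diff sum.cong simp: pd_mult G_diff l_diff)

lemma Gamma_eq: "Gamma g c a b y = (1/2) * (\<Sum>d\<in>UNIV. ginv g y $ c $ d *
      (pd a (\<lambda>y. g y $ d $ b) y + pd b (\<lambda>y. g y $ d $ a) y - pd d (\<lambda>y. g y $ a $ b) y))"
  unfolding Gamma_def ..

lemma Gamma_lo: 
  assumes y: "y \<in> U"
  shows "(\<Sum>c\<in>UNIV. Gamma g c a b y * X c) = (1/2) * (\<Sum>d\<in>UNIV. \<Sum>c\<in>UNIV. ginv g y $ c $ d * X c *
      (pd a (\<lambda>y. g y $ d $ b) y + pd b (\<lambda>y. g y $ d $ a) y - pd d (\<lambda>y. g y $ a $ b) y))"
  unfolding Gamma_eq sum_distrib_left sum_distrib_right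
  by (subst sum.swap) (simp add: mult_ac)

lemma Gamma_lo_contract:
  assumes y: "y \<in> U"
  shows "(\<Sum>c\<in>UNIV. Gamma g c a b y * lo c y) = (1/2) * (\<Sum>d\<in>UNIV. 
      (pd a (\<lambda>y. g y $ d $ b) y + pd b (\<lambda>y. g y $ d $ a) y - pd d (\<lambda>y. g y $ a $ b) y) * l y $ d)"
proof -
  have "(\<Sum>c\<in>UNIV. Gamma g c a b y * lo c y) = (1/2) * (\<Sum>c\<in>UNIV. (\<Sum>d\<in>UNIV. ginv g y $ c $ d *
      (pd a (\<lambda>y. g y $ d $ b) y + pd b (\<lambda>y. g y $ d $ a) y - pd d (\<lambda>y. g y $ a $ b) y)) * lo c y)"
    unfolding Gamma_eq by (simp add: sum_distrib_left mult_ac)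
  also have "\<dots> = (1/2) * (\<Sum>d\<in>UNIV. 
      (pd a (\<lambda>y. g y $ d $ b) y + pd b (\<lambda>y. g y $ d $ a) y - pd d (\<lambda>y. g y $ a $ b) y) * l y $ d)"
    using contract_inv[of "\<lambda>a b. g y $ a $ b" "\<lambda>a b. ginv g y $ a $ b"] Gsym[OF y] GH[OF y] by simp
  finally show ?thesis .
qed

lemma null_deriv:
  assumes y: "y \<in> U"
  shows "(\<Sum>a\<in>UNIV. \<Sum>c\<in>UNIV. g y $ a $ c * l y $ a * pd k (\<lambda>y. l y $ c) y
     + (g y $ a $ c * pd k (\<lambda>y. l y $ a) y + pd k (\<lambda>y. g y $ a $ c) y * l y $ a) * l y $ c) = 0"
proof -
  have "pd k (\<lambda>y. ip g y (l y) (l y)) y = pd k (\<lambda>y. 0) y"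
    by (rule pd_cong[OF U_open y]) (use frame in \<open>auto simp: null_frame_def\<close>)
  also have "\<dots> = 0" by (rule pd_const)
  finally have 0: "pd k (\<lambda>y. ip g y (l y) (l y)) y = 0" .
  have "pd k (\<lambda>y. ip g y (l y) (l y)) y = (\<Sum>a\<in>UNIV. \<Sum>c\<in>UNIV. g y $ a $ c * l y $ a * pd k (\<lambda>y. l y $ c) y
     + (g y $ a $ c * pd k (\<lambda>y. l y $ a) y + pd k (\<lambda>y. g y $ a $ c) y * l y $ a) * l y $ c)"
    unfolding ip_def
    by (simp add: pd_sum pd_mult G_diff[OF y] l_diff[OF y] differentiable_mult differentiable_sum)
  then show ?thesis using 0 by simp
qed

lemma I1:
  assumes y: "y \<in> U"
  shows "(\<Sum>a\<in>UNIV. l y $ a * cov_low g l a b y) = 0"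
proof -
  define la where "la a = l y $ a" for a
  define dl where "dl a = pd b (\<lambda>y. l y $ a) y" for a
  define G where "G a c = g y $ a $ c" for a c
  define dG where "dG k a c = pd k (\<lambda>y. g y $ a $ c) y" for k a c
  define X where "X = (\<Sum>a\<in>UNIV. \<Sum>c\<in>UNIV. la a * la c * dG b a c)"
  define Y where "Y = (\<Sum>a\<in>UNIV. \<Sum>c\<in>UNIV. la a * G a c * dl c)"
  have Gs: "G a c = G c a" for a c unfolding G_def using Gsym[OF y] .
  have dGs: "dG k a c = dG k c a" for k a c unfolding dG_def using dG_sym[OF y] .
  have cl: "cov_low g l a b y = (\<Sum>c\<in>UNIV. G a c * dl c + dG b a c * la c)
      - (1/2) * (\<Sum>d\<in>UNIV. (dG a d b + dG b d a - dG d a b) * la d)" for a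
    unfolding cov_low_def dlo_eq[OF y] Gamma_lo_contract[OF y] G_def dG_def la_def dl_def ..
  have N: "(\<Sum>a\<in>UNIV. \<Sum>c\<in>UNIV. G a c * la a * dl c + (G a c * dl a + dG b a c * la a) * la c) = 0"
    using null_deriv[OF y, of b] unfolding G_def la_def dl_def dG_def .
  have N2: "(\<Sum>a\<in>UNIV. \<Sum>c\<in>UNIV. G a c * la a * dl c + (G a c * dl a + dG b a c * la a) * la c)
      = Y + (\<Sum>a\<in>UNIV. \<Sum>c\<in>UNIV. la c * G a c * dl a) + X"
    unfolding X_def Y_def by (simp add: sum.distrib algebra_simps)
  have Y2: "(\<Sum>a\<in>UNIV. \<Sum>c\<in>UNIV. la c * G a c * dl a) = Y"
    unfolding Y_def by (subst sum.swap) (simp add: Gs)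
  have A1: "(\<Sum>a\<in>UNIV. la a * (\<Sum>c\<in>UNIV. G a c * dl c + dG b a c * la c)) = Y + X"
    unfolding X_def Y_def by (simp add: sum_distrib_left sum.distrib algebra_simps)
  have A2: "(\<Sum>a\<in>UNIV. la a * (\<Sum>d\<in>UNIV. (dG a d b + dG b d a - dG d a b) * la d)) = X"
  proof -
    have "(\<Sum>a\<in>UNIV. la a * (\<Sum>d\<in>UNIV. (dG a d b + dG b d a - dG d a b) * la d))
       = (\<Sum>a\<in>UNIV. \<Sum>d\<in>UNIV. la a * la d * dG a d b) + (\<Sum>a\<in>UNIV. \<Sum>d\<in>UNIV. la a * la d * dG b d a)
         - (\<Sum>a\<in>UNIV. \<Sum>d\<in>UNIV. la a * la d * dG d a b)"
      by (simp add: sum_distrib_left sum.distrib sum_subtractf algebra_simps)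
    also have "(\<Sum>a\<in>UNIV. \<Sum>d\<in>UNIV. la a * la d * dG d a b) = (\<Sum>a\<in>UNIV. \<Sum>d\<in>UNIV. la a * la d * dG a d b)"
      by (subst sum.swap) (simp add: mult_ac)
    also have "(\<Sum>a\<in>UNIV. \<Sum>d\<in>UNIV. la a * la d * dG b d a) = X"
      unfolding X_def using dGs by simp
    finally show ?thesis by simp
  qed
  have "(\<Sum>a\<in>UNIV. l y $ a * cov_low g l a b y)
      = (\<Sum>a\<in>UNIV. la a * (\<Sum>c\<in>UNIV. G a c * dl c + dG b a c * la c))
        - (1/2) * (\<Sum>a\<in>UNIV. la a * (\<Sum>d\<in>UNIV. (dG a d b + dG b d a - dG d a b) * la d))"
    unfolding cl la_def by (rule sum_lin_diff)
  also have "\<dots> = Y + X - X / 2" unfolding A1 A2 by simp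
  also have "\<dots> = 0" using N N2 Y2 by simp
  finally show ?thesis .
qed

end


lemma contr2_add_left: "contr2 T (u + v) w = contr2 T u w + contr2 T v w"
  unfolding contr2_def by (simp add: algebra_simps sum.distrib)
lemma contr2_scale_left: "contr2 T (c *\<^sub>R u) w = c * contr2 T u w"
  unfolding contr2_def by (simp add: sum_distrib_left mult_ac)
lemma contr2_zero_left: "contr2 T 0 w = 0"
  unfolding contr2_def by simp
lemma contr2_sum_left: "contr2 T (\<Sum>k\<in>S. f k) w = (\<Sum>k\<in>S. contr2 T (f k) w)"
proof (cases "finite S")
  case True then show ?thesis
    by (induction S rule: finite_induct) (simp_all add: contr2_zero_left contr2_add_left)
next
  case False then show ?thesis by (simp add: contr2_zero_left)
qed
lemma contr2_add_right: "contr2 T w (u + v) = contr2 T w u + contr2 T w v"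
  unfolding contr2_def by (simp add: algebra_simps sum.distrib)
lemma contr2_scale_right: "contr2 T w (c *\<^sub>R u) = c * contr2 T w u"
  unfolding contr2_def by (simp add: sum_distrib_left mult_ac)
lemma contr2_zero_right: "contr2 T w 0 = 0"
  unfolding contr2_def by simp
lemma contr2_sum_right: "contr2 T w (\<Sum>k\<in>S. f k) = (\<Sum>k\<in>S. contr2 T w (f k))"
proof (cases "finite S")
  case True then show ?thesis
    by (induction S rule: finite_induct) (simp_all add: contr2_zero_right contr2_add_right)
next
  case False then show ?thesis by (simp add: contr2_zero_right)
qed

lemmas contr2_lin = contr2_add_left contr2_scale_left contr2_sum_left contr2_add_right contr2_scale_right contr2_sum_right

context kundt begin

lemma complete:
  "y \<in> U \<Longrightarrow> P = ip g y (nv y) P *\<^sub>R l y + ip g y (l y) P *\<^sub>R nv y + (\<Sum>i\<in>{2..CARD('n)-1}. ip g y (m i y) P *\<^sub>R m i y)"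
  using frame_complete[of g y "l y" "nv y" "\<lambda>i. m i y", OF Gsym frame dim] by blast

lemma L_l_left: "y \<in> U \<Longrightarrow> contr2 (\<lambda>a b. cov_low g l a b y) (l y) Q = 0"
proof -
  assume y: "y \<in> U"
  have "contr2 (\<lambda>a b. cov_low g l a b y) (l y) Q = (\<Sum>b\<in>UNIV. (\<Sum>a\<in>UNIV. l y $ a * cov_low g l a b y) * Q $ b)"
    unfolding contr2_def by (subst sum.swap) (simp add: sum_distrib_right sum_distrib_left mult_ac)
  also have "\<dots> = 0" using I1[OF y] by simp
  finally show ?thesis .
qed

lemma L_m_left:
  assumes y: "y \<in> U" and i: "i \<in> {2..CARD('n)-1}" and Q: "ip g y (l y) Q = 0"
  shows "contr2 (\<lambda>a b. cov_low g l a b y) (m i y) Q = 0"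
proof -
  let ?L = "\<lambda>a b. cov_low g l a b y"
  have "contr2 ?L (m i y) Q = contr2 ?L (m i y) (ip g y (nv y) Q *\<^sub>R l y + ip g y (l y) Q *\<^sub>R nv y + (\<Sum>j\<in>{2..CARD('n)-1}. ip g y (m j y) Q *\<^sub>R m j y))"
    using arg_cong[OF complete[OF y, of Q], of "contr2 ?L (m i y)"] .
  also have "\<dots> = 0" using Q kundt_i0[OF y i] kundt_ij[OF y i] by (simp add: contr2_lin)
  finally show ?thesis .
qed

lemma LPQ:
  assumes y: "y \<in> U" and P: "ip g y (l y) P = 0" and Q: "ip g y (l y) Q = 0"
  shows "contr2 (\<lambda>a b. cov_low g l a b y) P Q = 0"
proof -
  let ?L = "\<lambda>a b. cov_low g l a b y"
  have "contr2 ?L P Q = contr2 ?L (ip g y (nv y) P *\<^sub>R l y + ip g y (l y) P *\<^sub>R nv y + (\<Sum>j\<in>{2..CARD('n)-1}. ip g y (m j y) P *\<^sub>R m j y)) Q"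
    using arg_cong[OF complete[OF y, of P], of "\<lambda>v. contr2 ?L v Q"] .
  also have "\<dots> = 0" using P L_l_left[OF y] L_m_left[OF y _ Q] by (simp add: contr2_lin)
  finally show ?thesis .
qed

end


lemma DL_alg:
  fixes lo A B P Q S :: "'n::finite \<Rightarrow> real" and dlo dA dB L :: "'n \<Rightarrow> 'n \<Rightarrow> real"
    and Ga :: "'n \<Rightarrow> 'n \<Rightarrow> 'n \<Rightarrow> real" and dL :: "'n \<Rightarrow> 'n \<Rightarrow> 'n \<Rightarrow> real"
  assumes L: "\<And>b d. L b d = lo b * A d + B b * lo d"
    and dL: "\<And>c b d. dL c b d = lo b * dA c d + dlo c b * A d + B b * dlo c d + dB c b * lo d"
    and Gs: "\<And>e b c. Ga e c b = Ga e b c"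
    and Ld: "\<And>b c. L b c = dlo c b - (\<Sum>e\<in>UNIV. Ga e b c * lo e)"
    and P: "(\<Sum>b\<in>UNIV. lo b * P b) = 0" and Q: "(\<Sum>b\<in>UNIV. lo b * Q b) = 0"
    and S: "(\<Sum>b\<in>UNIV. lo b * S b) = 0"
  shows "(\<Sum>c\<in>UNIV. \<Sum>b\<in>UNIV. \<Sum>d\<in>UNIV. (dL c b d - (\<Sum>e\<in>UNIV. Ga e c b * L e d)
            - (\<Sum>e\<in>UNIV. Ga e c d * L b e)) * P b * Q c * S d) = 0"
proof -
  define AS where "AS = (\<Sum>d\<in>UNIV. A d * S d)"
  define BP where "BP = (\<Sum>b\<in>UNIV. B b * P b)"
  have LS: "(\<Sum>d\<in>UNIV. L e d * S d) = lo e * AS" for e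
  proof -
    have "(\<Sum>d\<in>UNIV. L e d * S d) = lo e * (\<Sum>d\<in>UNIV. A d * S d) + B e * (\<Sum>d\<in>UNIV. lo d * S d)"
      unfolding L by (simp add: algebra_simps sum.distrib sum_distrib_left)
    then show ?thesis using S unfolding AS_def by simp
  qed
  have LP: "(\<Sum>b\<in>UNIV. L b e * P b) = BP * lo e" for e
  proof -
    have "(\<Sum>b\<in>UNIV. L b e * P b) = (\<Sum>b\<in>UNIV. lo b * P b) * A e + (\<Sum>b\<in>UNIV. B b * P b) * lo e"
      unfolding L by (simp add: algebra_simps sum.distrib sum_distrib_left sum_distrib_right)
    then show ?thesis using P unfolding BP_def by simp
  qed
  have T1: "(\<Sum>b\<in>UNIV. \<Sum>d\<in>UNIV. dL c b d * P b * S d)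
      = (\<Sum>b\<in>UNIV. dlo c b * P b) * AS + BP * (\<Sum>d\<in>UNIV. dlo c d * S d)" for c
  proof -
    have "(\<Sum>b\<in>UNIV. \<Sum>d\<in>UNIV. dL c b d * P b * S d)
      = (\<Sum>b\<in>UNIV. lo b * P b) * (\<Sum>d\<in>UNIV. dA c d * S d) + (\<Sum>b\<in>UNIV. dlo c b * P b) * AS
        + BP * (\<Sum>d\<in>UNIV. dlo c d * S d) + (\<Sum>b\<in>UNIV. dB c b * P b) * (\<Sum>d\<in>UNIV. lo d * S d)"
      unfolding AS_def BP_def dL sum_product by (simp add: sum.distrib algebra_simps)
    then show ?thesis using P S by simp
  qed
  have T2: "(\<Sum>b\<in>UNIV. \<Sum>d\<in>UNIV. (\<Sum>e\<in>UNIV. Ga e c b * L e d) * P b * S d)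
      = AS * (\<Sum>b\<in>UNIV. \<Sum>e\<in>UNIV. Ga e c b * P b * lo e)" for c
  proof -
    have "(\<Sum>b\<in>UNIV. \<Sum>d\<in>UNIV. (\<Sum>e\<in>UNIV. Ga e c b * L e d) * P b * S d)
       = (\<Sum>b\<in>UNIV. \<Sum>d\<in>UNIV. \<Sum>e\<in>UNIV. Ga e c b * P b * (L e d * S d))"
      by (simp add: sum_distrib_right sum_distrib_left mult_ac)
    also have "\<dots> = (\<Sum>b\<in>UNIV. \<Sum>e\<in>UNIV. \<Sum>d\<in>UNIV. Ga e c b * P b * (L e d * S d))"
      by (rule sum.cong[OF refl], rule sum.swap)
    also have "\<dots> = (\<Sum>b\<in>UNIV. \<Sum>e\<in>UNIV. Ga e c b * P b * (\<Sum>d\<in>UNIV. L e d * S d))"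
      by (simp add: sum_distrib_left)
    also have "\<dots> = (\<Sum>b\<in>UNIV. \<Sum>e\<in>UNIV. Ga e c b * P b * (lo e * AS))"
      by (simp only: LS)
    finally show ?thesis by (simp add: sum_distrib_left mult_ac)
  qed
  have T3: "(\<Sum>b\<in>UNIV. \<Sum>d\<in>UNIV. (\<Sum>e\<in>UNIV. Ga e c d * L b e) * P b * S d)
      = BP * (\<Sum>d\<in>UNIV. \<Sum>e\<in>UNIV. Ga e c d * S d * lo e)" for c
  proof -
    have "(\<Sum>b\<in>UNIV. \<Sum>d\<in>UNIV. (\<Sum>e\<in>UNIV. Ga e c d * L b e) * P b * S d)
       = (\<Sum>d\<in>UNIV. \<Sum>b\<in>UNIV. (\<Sum>e\<in>UNIV. Ga e c d * L b e) * P b * S d)"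
      by (rule sum.swap)
    also have "\<dots> = (\<Sum>d\<in>UNIV. \<Sum>b\<in>UNIV. \<Sum>e\<in>UNIV. Ga e c d * S d * (L b e * P b))"
      by (simp add: sum_distrib_right sum_distrib_left mult_ac)
    also have "\<dots> = (\<Sum>d\<in>UNIV. \<Sum>e\<in>UNIV. \<Sum>b\<in>UNIV. Ga e c d * S d * (L b e * P b))"
      by (rule sum.cong[OF refl], rule sum.swap)
    also have "\<dots> = (\<Sum>d\<in>UNIV. \<Sum>e\<in>UNIV. Ga e c d * S d * (\<Sum>b\<in>UNIV. L b e * P b))"
      by (simp add: sum_distrib_left)
    also have "\<dots> = (\<Sum>d\<in>UNIV. \<Sum>e\<in>UNIV. Ga e c d * S d * (BP * lo e))"
      by (simp only: LP)
    finally show ?thesis by (simp add: sum_distrib_left mult_ac)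
  qed
  have T: "(\<Sum>b\<in>UNIV. \<Sum>d\<in>UNIV. (dL c b d - (\<Sum>e\<in>UNIV. Ga e c b * L e d)
            - (\<Sum>e\<in>UNIV. Ga e c d * L b e)) * P b * S d)
      = AS * (\<Sum>b\<in>UNIV. P b * L b c) + BP * (\<Sum>d\<in>UNIV. S d * L d c)" for c
  proof -
    have "(\<Sum>b\<in>UNIV. \<Sum>d\<in>UNIV. (dL c b d - (\<Sum>e\<in>UNIV. Ga e c b * L e d)
            - (\<Sum>e\<in>UNIV. Ga e c d * L b e)) * P b * S d)
       = (\<Sum>b\<in>UNIV. \<Sum>d\<in>UNIV. dL c b d * P b * S d)
         - (\<Sum>b\<in>UNIV. \<Sum>d\<in>UNIV. (\<Sum>e\<in>UNIV. Ga e c b * L e d) * P b * S d)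
         - (\<Sum>b\<in>UNIV. \<Sum>d\<in>UNIV. (\<Sum>e\<in>UNIV. Ga e c d * L b e) * P b * S d)"
      by (simp add: sum_subtractf left_diff_distrib)
    also have "\<dots> = AS * (\<Sum>b\<in>UNIV. P b * (dlo c b - (\<Sum>e\<in>UNIV. Ga e c b * lo e)))
        + BP * (\<Sum>d\<in>UNIV. S d * (dlo c d - (\<Sum>e\<in>UNIV. Ga e c d * lo e)))"
      unfolding T1 T2 T3
      by (simp add: algebra_simps sum_subtractf sum_distrib_left sum.distrib)
    also have "\<dots> = AS * (\<Sum>b\<in>UNIV. P b * L b c) + BP * (\<Sum>d\<in>UNIV. S d * L d c)"
      unfolding Ld using Gs by simp
    finally show ?thesis .
  qed
  have XL: "(\<Sum>b\<in>UNIV. X b * L b c) = (\<Sum>b\<in>UNIV. B b * X b) * lo c"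
    if X: "(\<Sum>b\<in>UNIV. lo b * X b) = 0" for X :: "'n \<Rightarrow> real" and c
  proof -
    have "(\<Sum>b\<in>UNIV. X b * L b c) = (\<Sum>b\<in>UNIV. lo b * X b) * A c + (\<Sum>b\<in>UNIV. B b * X b) * lo c"
      unfolding L by (simp add: algebra_simps sum.distrib sum_distrib_left sum_distrib_right)
    then show ?thesis using X by simp
  qed
  have XY: "(\<Sum>c\<in>UNIV. Q c * (\<Sum>b\<in>UNIV. X b * L b c)) = 0"
    if X: "(\<Sum>b\<in>UNIV. lo b * X b) = 0" for X :: "'n \<Rightarrow> real"
  proof -
    have "(\<Sum>c\<in>UNIV. Q c * (\<Sum>b\<in>UNIV. X b * L b c)) = (\<Sum>b\<in>UNIV. B b * X b) * (\<Sum>c\<in>UNIV. lo c * Q c)"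
      unfolding XL[OF X] by (simp add: sum_distrib_left sum_distrib_right mult_ac)
    then show ?thesis using Q by simp
  qed
  have "(\<Sum>c\<in>UNIV. \<Sum>b\<in>UNIV. \<Sum>d\<in>UNIV. (dL c b d - (\<Sum>e\<in>UNIV. Ga e c b * L e d)
            - (\<Sum>e\<in>UNIV. Ga e c d * L b e)) * P b * Q c * S d)
      = (\<Sum>c\<in>UNIV. Q c * (\<Sum>b\<in>UNIV. \<Sum>d\<in>UNIV. (dL c b d - (\<Sum>e\<in>UNIV. Ga e c b * L e d)
            - (\<Sum>e\<in>UNIV. Ga e c d * L b e)) * P b * S d))"
    by (simp add: sum_distrib_left mult_ac)
  also have "\<dots> = AS * (\<Sum>c\<in>UNIV. Q c * (\<Sum>b\<in>UNIV. P b * L b c)) + BP * (\<Sum>c\<in>UNIV. Q c * (\<Sum>d\<in>UNIV. S d * L d c))"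
    unfolding T by (simp add: algebra_simps sum.distrib sum_distrib_left)
  also have "\<dots> = 0" using XY[OF P] XY[OF S] by simp
  finally show ?thesis .
qed


lemma contr2_axis: "contr2 T (axis b 1) (axis d 1) = T b d"
proof -
  have "contr2 T (axis b 1) (axis d 1) = (\<Sum>a\<in>UNIV. \<Sum>c\<in>UNIV. if a = b \<and> c = d then T a c else 0)"
    unfolding contr2_def axis_def by (intro sum.cong refl) auto
  also have "\<dots> = (\<Sum>a\<in>UNIV. if a = b then T a d else 0)"
    by (intro sum.cong refl) auto
  finally show ?thesis by simp
qed

lemma contr2_diff_left: "contr2 T (u - v) w = contr2 T u w - contr2 T v w"
  unfolding contr2_def by (simp add: algebra_simps sum_subtractf)
lemma contr2_diff_right: "contr2 T w (u - v) = contr2 T w u - contr2 T w v"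
  unfolding contr2_def by (simp add: algebra_simps sum_subtractf)

context kundt begin

lemma ip_lo: "y \<in> U \<Longrightarrow> ip g y (l y) v = (\<Sum>b\<in>UNIV. lo b y * v $ b)"
proof -
  assume y: "y \<in> U"
  have "ip g y (l y) v = (\<Sum>a\<in>UNIV. \<Sum>b\<in>UNIV. g y $ b $ a * l y $ a * v $ b)"
    unfolding ip_def using Gsym[OF y] by simp
  also have "\<dots> = (\<Sum>b\<in>UNIV. \<Sum>a\<in>UNIV. g y $ b $ a * l y $ a * v $ b)" by (rule sum.swap)
  also have "\<dots> = (\<Sum>b\<in>UNIV. lo b y * v $ b)" by (simp add: sum_distrib_right)
  finally show ?thesis .
qed

lemma ip_axis: "(\<Sum>b\<in>UNIV. f b * axis k (1::real) $ b) = f k"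
  unfolding axis_def by (simp add: if_distrib cong: if_cong)

lemma decomp:
  assumes x: "x \<in> U"
  obtains V A B where "open V" "x \<in> V" "V \<subseteq> U"
    "\<And>b. A b differentiable (at x)" "\<And>b. B b differentiable (at x)"
    "\<And>y b d. y \<in> V \<Longrightarrow> cov_low g l b d y = lo b y * A d y + B b y * lo d y"
proof -
  let ?L = "\<lambda>b d y. cov_low g l b d y"
  have "ip g x (l x) (nv x) = 1" using frame[OF x] unfolding null_frame_def by simp
  then have "(\<Sum>b\<in>UNIV. lo b x * nv x $ b) \<noteq> 0" using ip_lo[OF x] by simp
  then obtain j where j: "lo j x \<noteq> 0" by (metis (no_types, lifting) mult_eq_0_iff sum.neutral)
  define V where "V = U \<inter> lo j -` (-{0})"
  have oV: "open V" unfolding V_def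
    by (rule continuous_open_preimage[OF differentiable_imp_continuous_on[OF Dn_diff_on[OF lo_Dn]] U_open])
      (rule open_Compl, simp)
  have xV: "x \<in> V" using x j unfolding V_def by simp
  have VU: "V \<subseteq> U" unfolding V_def by blast
  define s where "s y = 1 / lo j y" for y
  define A where "A d y = s y * ?L j d y" for d y
  define B where "B b y = s y * ?L b j y - s y * s y * ?L j j y * lo b y" for b y
  have sd: "s differentiable (at x)" unfolding s_def
    by (intro differentiable_divide differentiable_const lo_diff x j)
  have Ad: "A b differentiable (at x)" for b unfolding A_def
    by (intro differentiable_mult sd L_diff x)
  have Bd: "B b differentiable (at x)" for b unfolding B_def
    by (intro differentiable_mult differentiable_diff sd L_diff lo_diff x)
  have dec: "?L b d y = lo b y * A d y + B b y * lo d y" if y: "y \<in> V" for y b d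
  proof -
    have yU: "y \<in> U" using y VU by blast
    have sj: "s y * lo j y = 1" using y unfolding V_def s_def by simp
    define P where "P = axis b 1 - (s y * lo b y) *\<^sub>R axis j (1::real)"
    define Q where "Q = axis d 1 - (s y * lo d y) *\<^sub>R axis j (1::real)"
    have iP: "ip g y (l y) P = 0" unfolding P_def ip_diff_right ip_scale_right ip_lo[OF yU] ip_axis
      using sj by (simp add: algebra_simps)
    have iQ: "ip g y (l y) Q = 0" unfolding Q_def ip_diff_right ip_scale_right ip_lo[OF yU] ip_axis
      using sj by (simp add: algebra_simps)
    have "0 = contr2 (\<lambda>a b. ?L a b y) P Q" using LPQ[OF yU iP iQ] by simp
    also have "\<dots> = ?L b d y - s y * lo d y * ?L b j y - s y * lo b y * ?L j d y
        + s y * lo b y * (s y * lo d y) * ?L j j y"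
      unfolding P_def Q_def contr2_diff_left contr2_diff_right contr2_scale_left contr2_scale_right contr2_axis
      by (simp add: algebra_simps)
    finally show ?thesis unfolding A_def B_def by (simp add: algebra_simps)
  qed
  show ?thesis using that[OF oV xV VU Ad Bd dec] .
qed

end


lemma ricci_alg:
  fixes lo :: "'n::finite \<Rightarrow> real" and dlo L :: "'n \<Rightarrow> 'n \<Rightarrow> real"
    and ddlo Ga dL :: "'n \<Rightarrow> 'n \<Rightarrow> 'n \<Rightarrow> real" and dGa :: "'n \<Rightarrow> 'n \<Rightarrow> 'n \<Rightarrow> 'n \<Rightarrow> real"
  assumes dds: "ddlo c d b = ddlo d c b"
    and Gs: "\<And>e b d. Ga e b d = Ga e d b" and dGs: "\<And>c e b d. dGa c e b d = dGa c e d b"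
    and L: "\<And>b d. L b d = dlo d b - (\<Sum>e\<in>UNIV. Ga e b d * lo e)"
    and dL: "\<And>c b d. dL c b d = ddlo c d b - (\<Sum>e\<in>UNIV. dGa c e b d * lo e + Ga e b d * dlo c e)"
  shows "(\<Sum>f\<in>UNIV. lo f * (dGa c f d b - dGa d f c b + (\<Sum>e\<in>UNIV. Ga f c e * Ga e d b - Ga f d e * Ga e c b)))
     = - ((dL c b d - (\<Sum>e\<in>UNIV. Ga e c b * L e d) - (\<Sum>e\<in>UNIV. Ga e c d * L b e))
         - (dL d b c - (\<Sum>e\<in>UNIV. Ga e d b * L e c) - (\<Sum>e\<in>UNIV. Ga e d c * L b e)))"
proof -
  define A1 where "A1 = (\<Sum>e\<in>UNIV. lo e * dGa c e b d)"
  define A2 where "A2 = (\<Sum>e\<in>UNIV. lo e * dGa d e b c)"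
  define Qcd where "Qcd = (\<Sum>f\<in>UNIV. \<Sum>e\<in>UNIV. lo f * Ga f c e * Ga e d b)"
  define Qdc where "Qdc = (\<Sum>f\<in>UNIV. \<Sum>e\<in>UNIV. lo f * Ga f d e * Ga e c b)"
  define Dc where "Dc = (\<Sum>e\<in>UNIV. Ga e b d * dlo c e)"
  define Dd where "Dd = (\<Sum>e\<in>UNIV. Ga e b c * dlo d e)"
  have lhs: "(\<Sum>f\<in>UNIV. lo f * (dGa c f d b - dGa d f c b + (\<Sum>e\<in>UNIV. Ga f c e * Ga e d b - Ga f d e * Ga e c b)))
      = A1 - A2 + Qcd - Qdc"
  proof -
    have "(\<Sum>f\<in>UNIV. lo f * (dGa c f d b - dGa d f c b + (\<Sum>e\<in>UNIV. Ga f c e * Ga e d b - Ga f d e * Ga e c b)))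
      = (\<Sum>f\<in>UNIV. lo f * dGa c f d b) - (\<Sum>f\<in>UNIV. lo f * dGa d f c b)
        + (\<Sum>f\<in>UNIV. \<Sum>e\<in>UNIV. lo f * Ga f c e * Ga e d b) - (\<Sum>f\<in>UNIV. \<Sum>e\<in>UNIV. lo f * Ga f d e * Ga e c b)"
      by (simp add: algebra_simps sum.distrib sum_subtractf sum_distrib_left)
    also have "(\<Sum>f\<in>UNIV. lo f * dGa c f d b) = A1" unfolding A1_def using dGs by simp
    also have "(\<Sum>f\<in>UNIV. lo f * dGa d f c b) = A2" unfolding A2_def using dGs by simp
    finally show ?thesis unfolding Qcd_def Qdc_def .
  qed
  have dL1: "dL c b d = ddlo c d b - (A1 + Dc)"
    unfolding dL A1_def Dc_def by (simp add: sum.distrib mult_ac)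
  have dL2: "dL d b c = ddlo d c b - (A2 + Dd)"
    unfolding dL A2_def Dd_def by (simp add: sum.distrib mult_ac)
  have swp: "(\<Sum>e\<in>UNIV. Ga e x b * (\<Sum>f\<in>UNIV. Ga f e y * lo f)) = (\<Sum>f\<in>UNIV. \<Sum>e\<in>UNIV. lo f * Ga f y e * Ga e x b)" for x y
  proof -
    have "(\<Sum>e\<in>UNIV. Ga e x b * (\<Sum>f\<in>UNIV. Ga f e y * lo f)) = (\<Sum>e\<in>UNIV. \<Sum>f\<in>UNIV. lo f * Ga f y e * Ga e x b)"
      by (simp add: sum_distrib_left mult_ac Gs[of _ _ y])
    also have "\<dots> = (\<Sum>f\<in>UNIV. \<Sum>e\<in>UNIV. lo f * Ga f y e * Ga e x b)" by (rule sum.swap)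
    finally show ?thesis .
  qed
  have E1: "(\<Sum>e\<in>UNIV. Ga e c b * L e d) = Dd - Qdc"
  proof -
    have "(\<Sum>e\<in>UNIV. Ga e c b * L e d) = (\<Sum>e\<in>UNIV. Ga e c b * dlo d e) - (\<Sum>e\<in>UNIV. Ga e c b * (\<Sum>f\<in>UNIV. Ga f e d * lo f))"
      unfolding L by (simp add: right_diff_distrib sum_subtractf)
    also have "(\<Sum>e\<in>UNIV. Ga e c b * dlo d e) = Dd" unfolding Dd_def using Gs by simp
    also have "(\<Sum>e\<in>UNIV. Ga e c b * (\<Sum>f\<in>UNIV. Ga f e d * lo f)) = Qdc" unfolding Qdc_def swp ..
    finally show ?thesis .
  qed
  have E2: "(\<Sum>e\<in>UNIV. Ga e d b * L e c) = Dc - Qcd"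
  proof -
    have "(\<Sum>e\<in>UNIV. Ga e d b * L e c) = (\<Sum>e\<in>UNIV. Ga e d b * dlo c e) - (\<Sum>e\<in>UNIV. Ga e d b * (\<Sum>f\<in>UNIV. Ga f e c * lo f))"
      unfolding L by (simp add: right_diff_distrib sum_subtractf)
    also have "(\<Sum>e\<in>UNIV. Ga e d b * dlo c e) = Dc" unfolding Dc_def using Gs by simp
    also have "(\<Sum>e\<in>UNIV. Ga e d b * (\<Sum>f\<in>UNIV. Ga f e c * lo f)) = Qcd" unfolding Qcd_def swp ..
    finally show ?thesis .
  qed
  have E3: "(\<Sum>e\<in>UNIV. Ga e c d * L b e) = (\<Sum>e\<in>UNIV. Ga e d c * L b e)" using Gs by simp
  show ?thesis unfolding lhs dL1 dL2 E1 E2 E3 using dds by simp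
qed


context kundt begin

definition DL :: "real^'n \<Rightarrow> 'n \<Rightarrow> 'n \<Rightarrow> 'n \<Rightarrow> real" where
  "DL x c b d = pd c (\<lambda>y. cov_low g l b d y) x - (\<Sum>e\<in>UNIV. Gamma g e c b x * cov_low g l e d x)
     - (\<Sum>e\<in>UNIV. Gamma g e c d x * cov_low g l b e x)"

lemma dL_eq:
  assumes x: "x \<in> U"
  shows "pd c (\<lambda>y. cov_low g l b d y) x = pd c (pd d (lo b)) x
     - (\<Sum>e\<in>UNIV. pd c (\<lambda>y. Gamma g e b d y) x * lo e x + Gamma g e b d x * pd c (lo e) x)"
proof -
  have "pd c (\<lambda>y. cov_low g l b d y) x = pd c (\<lambda>y. pd d (lo b) y - (\<Sum>e\<in>UNIV. Gamma g e b d y * lo e y)) x"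
    unfolding cov_low_def ..
  also have "\<dots> = pd c (pd d (lo b)) x - pd c (\<lambda>y. \<Sum>e\<in>UNIV. Gamma g e b d y * lo e y) x"
    by (rule pd_diff) (auto intro!: dlo_diff x differentiable_sum differentiable_mult Gamma_diff lo_diff)
  also have "pd c (\<lambda>y. \<Sum>e\<in>UNIV. Gamma g e b d y * lo e y) x
      = (\<Sum>e\<in>UNIV. pd c (\<lambda>y. Gamma g e b d y * lo e y) x)"
    by (rule pd_sum) (auto intro!: differentiable_mult Gamma_diff lo_diff x)
  also have "\<dots> = (\<Sum>e\<in>UNIV. pd c (\<lambda>y. Gamma g e b d y) x * lo e x + Gamma g e b d x * pd c (lo e) x)"
    by (rule sum.cong[OF refl]) (simp add: pd_mult Gamma_diff[OF x] lo_diff[OF x])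
  finally show ?thesis .
qed

lemma Rl_eq:
  assumes x: "x \<in> U"
  shows "(\<Sum>f\<in>UNIV. lo f x * Riem g f b c d x) = DL x d b c - DL x c b d"
proof -
  have "(\<Sum>f\<in>UNIV. lo f x * Riem g f b c d x) = 
     - ((DL x c b d) - (DL x d b c))"
    unfolding Riem_def DL_def
  proof (rule ricci_alg[where ddlo = "\<lambda>c d b. pd c (pd d (lo b)) x" and dlo = "\<lambda>c e. pd c (lo e) x"])
    show "pd c (pd d (lo b)) x = pd d (pd c (lo b)) x" by (rule schwarz[OF U_open x lo_Dn])
    show "Gamma g e b d x = Gamma g e d b x" for e b d using Gamma_sym[OF x] .
    show "pd c (\<lambda>y. Gamma g e b d y) x = pd c (\<lambda>y. Gamma g e d b y) x" for c e b d using dGamma_sym[OF x] .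
    show "cov_low g l b d x = pd d (lo b) x - (\<Sum>e\<in>UNIV. Gamma g e b d x * lo e x)" for b d
      unfolding cov_low_def ..
    show "pd c (\<lambda>y. cov_low g l b d y) x = pd c (pd d (lo b)) x
     - (\<Sum>e\<in>UNIV. pd c (\<lambda>y. Gamma g e b d y) x * lo e x + Gamma g e b d x * pd c (lo e) x)" for c b d
      using dL_eq[OF x] .
  qed
  then show ?thesis by simp
qed

lemma K0:
  assumes x: "x \<in> U" and P: "ip g x (l x) P = 0" and Q: "ip g x (l x) Q = 0" and S: "ip g x (l x) S = 0"
  shows "(\<Sum>c\<in>UNIV. \<Sum>b\<in>UNIV. \<Sum>d\<in>UNIV. DL x c b d * P $ b * Q $ c * S $ d) = 0"
proof -
  obtain V A B where V: "open V" "x \<in> V" "V \<subseteq> U"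
    and Ad: "\<And>b. A b differentiable (at x)" and Bd: "\<And>b. B b differentiable (at x)"
    and dec: "\<And>y b d. y \<in> V \<Longrightarrow> cov_low g l b d y = lo b y * A d y + B b y * lo d y"
    using decomp[OF x] by blast
  have dLx: "pd c (\<lambda>y. cov_low g l b d y) x = lo b x * pd c (A d) x + pd c (lo b) x * A d x
      + B b x * pd c (lo d) x + pd c (B b) x * lo d x" for c b d
  proof -
    have "pd c (\<lambda>y. cov_low g l b d y) x = pd c (\<lambda>y. lo b y * A d y + B b y * lo d y) x"
      by (rule pd_cong[OF V(1,2)]) (rule dec)
    also have "\<dots> = pd c (\<lambda>y. lo b y * A d y) x + pd c (\<lambda>y. B b y * lo d y) x"
      by (rule pd_add) (auto intro!: differentiable_mult lo_diff x Ad Bd)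
    also have "\<dots> = lo b x * pd c (A d) x + pd c (lo b) x * A d x
      + B b x * pd c (lo d) x + pd c (B b) x * lo d x"
      by (simp add: pd_mult lo_diff[OF x] Ad Bd)
    finally show ?thesis .
  qed
  show ?thesis unfolding DL_def
  proof (rule DL_alg[where lo = "\<lambda>b. lo b x" and A = "\<lambda>d. A d x" and B = "\<lambda>b. B b x"])
    show "cov_low g l b d x = lo b x * A d x + B b x * lo d x" for b d using dec V(2) .
    show "pd c (\<lambda>y. cov_low g l b d y) x = lo b x * pd c (A d) x + pd c (lo b) x * A d x
      + B b x * pd c (lo d) x + pd c (B b) x * lo d x" for c b d by (rule dLx)
    show "Gamma g e c b x = Gamma g e b c x" for e b c using Gamma_sym[OF x] .
    show "cov_low g l b c x = pd c (lo b) x - (\<Sum>e\<in>UNIV. Gamma g e b c x * lo e x)" for b c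
      unfolding cov_low_def ..
    show "(\<Sum>b\<in>UNIV. lo b x * P $ b) = 0" using P ip_lo[OF x] by simp
    show "(\<Sum>b\<in>UNIV. lo b x * Q $ b) = 0" using Q ip_lo[OF x] by simp
    show "(\<Sum>b\<in>UNIV. lo b x * S $ b) = 0" using S ip_lo[OF x] by simp
  qed
qed

lemma claimK:
  assumes x: "x \<in> U" and P: "ip g x (l x) P = 0" and Q: "ip g x (l x) Q = 0" and S: "ip g x (l x) S = 0"
  shows "(\<Sum>b\<in>UNIV. \<Sum>c\<in>UNIV. \<Sum>d\<in>UNIV. (\<Sum>f\<in>UNIV. lo f x * Riem g f b c d x) * P $ b * Q $ c * S $ d) = 0"
proof -
  have "(\<Sum>b\<in>UNIV. \<Sum>c\<in>UNIV. \<Sum>d\<in>UNIV. (\<Sum>f\<in>UNIV. lo f x * Riem g f b c d x) * P $ b * Q $ c * S $ d)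
     = (\<Sum>b\<in>UNIV. \<Sum>c\<in>UNIV. \<Sum>d\<in>UNIV. DL x d b c * P $ b * Q $ c * S $ d)
      - (\<Sum>b\<in>UNIV. \<Sum>c\<in>UNIV. \<Sum>d\<in>UNIV. DL x c b d * P $ b * Q $ c * S $ d)"
    unfolding Rl_eq[OF x] by (simp add: left_diff_distrib sum_subtractf)
  also have "(\<Sum>b\<in>UNIV. \<Sum>c\<in>UNIV. \<Sum>d\<in>UNIV. DL x c b d * P $ b * Q $ c * S $ d)
     = (\<Sum>c\<in>UNIV. \<Sum>b\<in>UNIV. \<Sum>d\<in>UNIV. DL x c b d * P $ b * Q $ c * S $ d)"
    by (rule sum.swap)
  also have "\<dots> = 0" by (rule K0[OF x P Q S])
  also have "(\<Sum>b\<in>UNIV. \<Sum>c\<in>UNIV. \<Sum>d\<in>UNIV. DL x d b c * P $ b * Q $ c * S $ d)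
     = (\<Sum>b\<in>UNIV. \<Sum>d\<in>UNIV. \<Sum>c\<in>UNIV. DL x d b c * P $ b * Q $ c * S $ d)"
    by (rule sum.cong[OF refl], rule sum.swap)
  also have "\<dots> = (\<Sum>d\<in>UNIV. \<Sum>b\<in>UNIV. \<Sum>c\<in>UNIV. DL x d b c * P $ b * Q $ c * S $ d)"
    by (rule sum.swap)
  also have "\<dots> = (\<Sum>d\<in>UNIV. \<Sum>b\<in>UNIV. \<Sum>c\<in>UNIV. DL x d b c * P $ b * S $ d * Q $ c)"
    by (simp add: mult_ac)
  also have "\<dots> = 0" by (rule K0[OF x P S Q])
  finally show ?thesis by simp
qed

end


lemma GH_contract:
  fixes G H :: "'n::finite \<Rightarrow> 'n \<Rightarrow> real"
  assumes GH: "\<And>a b. (\<Sum>c\<in>UNIV. G a c * H c b) = (if a = b then 1 else 0)"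
  shows "(\<Sum>e\<in>UNIV. G a e * (\<Sum>f\<in>UNIV. H e f * X f)) = X a"
proof -
  have "(\<Sum>e\<in>UNIV. G a e * (\<Sum>f\<in>UNIV. H e f * X f)) = (\<Sum>e\<in>UNIV. \<Sum>f\<in>UNIV. G a e * H e f * X f)"
    by (simp add: sum_distrib_left mult_ac)
  also have "\<dots> = (\<Sum>f\<in>UNIV. \<Sum>e\<in>UNIV. G a e * H e f * X f)" by (rule sum.swap)
  also have "\<dots> = (\<Sum>f\<in>UNIV. (if a = f then 1 else 0) * X f)"
    by (simp add: sum_distrib_right[symmetric] GH)
  also have "\<dots> = (\<Sum>f\<in>UNIV. if a = f then X f else 0)" by (intro sum.cong refl) simp
  also have "\<dots> = X a" by simp
  finally show ?thesis .
qed

lemma antisym_alg: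
  fixes G H :: "'n::finite \<Rightarrow> 'n \<Rightarrow> real" and dG Ga G1 :: "'n \<Rightarrow> 'n \<Rightarrow> 'n \<Rightarrow> real"
    and ddG dGa :: "'n \<Rightarrow> 'n \<Rightarrow> 'n \<Rightarrow> 'n \<Rightarrow> real"
  assumes Hs: "\<And>a b. H a b = H b a"
    and GH: "\<And>a b. (\<Sum>c\<in>UNIV. G a c * H c b) = (if a = b then 1 else 0)"
    and dGs: "\<And>k a b. dG k a b = dG k b a"
    and ddGs1: "\<And>c d a b. ddG c d a b = ddG d c a b"
    and ddGs2: "\<And>c d a b. ddG c d a b = ddG c d b a"
    and G1: "\<And>f d b. G1 f d b = (1/2) * (dG d f b + dG b f d - dG f d b)"
    and Ga: "\<And>e d b. Ga e d b = (\<Sum>f\<in>UNIV. H e f * G1 f d b)"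
    and dGa: "\<And>c a d b. (\<Sum>e\<in>UNIV. G a e * dGa c e d b)
         = (1/2) * (ddG c d a b + ddG c b a d - ddG c a d b) - (\<Sum>e\<in>UNIV. dG c a e * Ga e d b)"
  shows "(\<Sum>e\<in>UNIV. G a e * (dGa c e d b - dGa d e c b + (\<Sum>f\<in>UNIV. Ga e c f * Ga f d b - Ga e d f * Ga f c b)))
    = - (\<Sum>e\<in>UNIV. G b e * (dGa c e d a - dGa d e c a + (\<Sum>f\<in>UNIV. Ga e c f * Ga f d a - Ga e d f * Ga f c a)))"
proof -
  define Qf where "Qf c a d b = (\<Sum>e\<in>UNIV. G1 e c a * Ga e d b)" for c a d b
  have Qs: "Qf c a d b = Qf d b c a" for c a d b
  proof -
    have "Qf c a d b = (\<Sum>e\<in>UNIV. \<Sum>f\<in>UNIV. G1 e c a * H e f * G1 f d b)"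
      unfolding Qf_def Ga by (simp add: sum_distrib_left mult_ac)
    also have "\<dots> = (\<Sum>f\<in>UNIV. \<Sum>e\<in>UNIV. G1 e c a * H e f * G1 f d b)" by (rule sum.swap)
    also have "\<dots> = Qf d b c a"
      unfolding Qf_def Ga by (simp add: sum_distrib_left mult_ac Hs)
    finally show ?thesis .
  qed
  have GGa: "(\<Sum>e\<in>UNIV. G a e * Ga e c f) = G1 a c f" for a c f
    unfolding Ga by (rule GH_contract[OF GH])
  have dGsplit: "dG c a e = G1 a c e + G1 e c a" for c a e
    unfolding G1 using dGs by (simp add: algebra_simps)
  have T: "(\<Sum>e\<in>UNIV. G a e * (dGa c e d b - dGa d e c b + (\<Sum>f\<in>UNIV. Ga e c f * Ga f d b - Ga e d f * Ga f c b)))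
     = (1/2) * (ddG c d a b + ddG c b a d - ddG c a d b) - (1/2) * (ddG d c a b + ddG d b a c - ddG d a c b)
       - Qf c a d b + Qf d a c b" for a b c d
  proof -
    have q: "(\<Sum>e\<in>UNIV. G a e * (\<Sum>f\<in>UNIV. Ga e c f * Ga f d b)) = (\<Sum>f\<in>UNIV. G1 a c f * Ga f d b)" for c d
    proof -
      have "(\<Sum>e\<in>UNIV. G a e * (\<Sum>f\<in>UNIV. Ga e c f * Ga f d b)) = (\<Sum>e\<in>UNIV. \<Sum>f\<in>UNIV. G a e * Ga e c f * Ga f d b)"
        by (simp add: sum_distrib_left mult_ac)
      also have "\<dots> = (\<Sum>f\<in>UNIV. \<Sum>e\<in>UNIV. G a e * Ga e c f * Ga f d b)" by (rule sum.swap)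
      also have "\<dots> = (\<Sum>f\<in>UNIV. G1 a c f * Ga f d b)"
        by (simp add: sum_distrib_right[symmetric] GGa)
      finally show ?thesis .
    qed
    have s: "(\<Sum>f\<in>UNIV. G1 a c f * Ga f d b) - (\<Sum>e\<in>UNIV. dG c a e * Ga e d b) = - Qf c a d b" for c d
      unfolding Qf_def dGsplit by (simp add: algebra_simps sum.distrib)
    have "(\<Sum>e\<in>UNIV. G a e * (dGa c e d b - dGa d e c b + (\<Sum>f\<in>UNIV. Ga e c f * Ga f d b - Ga e d f * Ga f c b)))
      = (\<Sum>e\<in>UNIV. G a e * dGa c e d b) - (\<Sum>e\<in>UNIV. G a e * dGa d e c b)
        + (\<Sum>e\<in>UNIV. G a e * (\<Sum>f\<in>UNIV. Ga e c f * Ga f d b)) - (\<Sum>e\<in>UNIV. G a e * (\<Sum>f\<in>UNIV. Ga e d f * Ga f c b))"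
      by (simp add: algebra_simps sum.distrib sum_subtractf)
    also have "\<dots> = (1/2) * (ddG c d a b + ddG c b a d - ddG c a d b) - (1/2) * (ddG d c a b + ddG d b a c - ddG d a c b)
       + ((\<Sum>f\<in>UNIV. G1 a c f * Ga f d b) - (\<Sum>e\<in>UNIV. dG c a e * Ga e d b))
       - ((\<Sum>f\<in>UNIV. G1 a d f * Ga f c b) - (\<Sum>e\<in>UNIV. dG d a e * Ga e c b))"
      unfolding dGa q by simp
    also have "\<dots> = (1/2) * (ddG c d a b + ddG c b a d - ddG c a d b) - (1/2) * (ddG d c a b + ddG d b a c - ddG d a c b)
       - Qf c a d b + Qf d a c b"
      unfolding s by simp
    finally show ?thesis .
  qed
  show ?thesis unfolding T
    using ddGs1[of c d a b] ddGs1[of c d b a] ddGs2[of c d a b] ddGs2[of d c a b]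
      ddGs2[of c b a d] ddGs2[of c a d b] ddGs2[of d b a c] ddGs2[of d a c b]
      Qs[of c a d b] Qs[of d a c b] Qs[of c b d a] Qs[of d b c a]
    by (simp add: algebra_simps)
qed

context kundt begin

lemma GGamma:
  assumes y: "y \<in> U"
  shows "(\<Sum>e\<in>UNIV. g y $ a $ e * Gamma g e d b y) =
    (1/2) * (pd d (\<lambda>y. g y $ a $ b) y + pd b (\<lambda>y. g y $ a $ d) y - pd a (\<lambda>y. g y $ d $ b) y)"
proof -
  have "(\<Sum>e\<in>UNIV. g y $ a $ e * Gamma g e d b y) = (1/2) * (\<Sum>e\<in>UNIV. g y $ a $ e * (\<Sum>f\<in>UNIV. ginv g y $ e $ f *
      (pd d (\<lambda>y. g y $ f $ b) y + pd b (\<lambda>y. g y $ f $ d) y - pd f (\<lambda>y. g y $ d $ b) y)))"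
    unfolding Gamma_def by (simp add: sum_distrib_left mult_ac)
  also have "\<dots> = (1/2) * (pd d (\<lambda>y. g y $ a $ b) y + pd b (\<lambda>y. g y $ a $ d) y - pd a (\<lambda>y. g y $ d $ b) y)"
    using GH_contract[of "\<lambda>a b. g y $ a $ b" "\<lambda>a b. ginv g y $ a $ b", OF GH[OF y]] by simp
  finally show ?thesis .
qed

lemma dGGamma:
  assumes x: "x \<in> U"
  shows "(\<Sum>e\<in>UNIV. g x $ a $ e * pd c (\<lambda>y. Gamma g e d b y) x)
    = (1/2) * (pd c (pd d (\<lambda>y. g y $ a $ b)) x + pd c (pd b (\<lambda>y. g y $ a $ d)) x - pd c (pd a (\<lambda>y. g y $ d $ b)) x)
      - (\<Sum>e\<in>UNIV. pd c (\<lambda>y. g y $ a $ e) x * Gamma g e d b x)"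
proof -
  have "pd c (\<lambda>y. \<Sum>e\<in>UNIV. g y $ a $ e * Gamma g e d b y) x
     = (\<Sum>e\<in>UNIV. pd c (\<lambda>y. g y $ a $ e * Gamma g e d b y) x)"
    by (rule pd_sum) (auto intro!: differentiable_mult G_diff Gamma_diff x)
  also have "\<dots> = (\<Sum>e\<in>UNIV. g x $ a $ e * pd c (\<lambda>y. Gamma g e d b y) x + pd c (\<lambda>y. g y $ a $ e) x * Gamma g e d b x)"
    by (rule sum.cong[OF refl]) (simp add: pd_mult G_diff[OF x] Gamma_diff[OF x])
  finally have 1: "pd c (\<lambda>y. \<Sum>e\<in>UNIV. g y $ a $ e * Gamma g e d b y) x
     = (\<Sum>e\<in>UNIV. g x $ a $ e * pd c (\<lambda>y. Gamma g e d b y) x) + (\<Sum>e\<in>UNIV. pd c (\<lambda>y. g y $ a $ e) x * Gamma g e d b x)"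
    by (simp add: sum.distrib)
  have "pd c (\<lambda>y. \<Sum>e\<in>UNIV. g y $ a $ e * Gamma g e d b y) x
     = pd c (\<lambda>y. (1/2) * (pd d (\<lambda>y. g y $ a $ b) y + pd b (\<lambda>y. g y $ a $ d) y - pd a (\<lambda>y. g y $ d $ b) y)) x"
    by (rule pd_cong[OF U_open x]) (rule GGamma)
  also have "\<dots> = (1/2) * pd c (\<lambda>y. pd d (\<lambda>y. g y $ a $ b) y + pd b (\<lambda>y. g y $ a $ d) y - pd a (\<lambda>y. g y $ d $ b) y) x"
    by (rule pd_cmult) (auto intro!: differentiable_add differentiable_diff dG_diff x)
  also have "pd c (\<lambda>y. pd d (\<lambda>y. g y $ a $ b) y + pd b (\<lambda>y. g y $ a $ d) y - pd a (\<lambda>y. g y $ d $ b) y) x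
     = pd c (\<lambda>y. pd d (\<lambda>y. g y $ a $ b) y + pd b (\<lambda>y. g y $ a $ d) y) x - pd c (pd a (\<lambda>y. g y $ d $ b)) x"
    by (rule pd_diff) (auto intro!: differentiable_add dG_diff x)
  also have "pd c (\<lambda>y. pd d (\<lambda>y. g y $ a $ b) y + pd b (\<lambda>y. g y $ a $ d) y) x
     = pd c (pd d (\<lambda>y. g y $ a $ b)) x + pd c (pd b (\<lambda>y. g y $ a $ d)) x"
    by (rule pd_add) (auto intro!: dG_diff x)
  finally have 2: "pd c (\<lambda>y. \<Sum>e\<in>UNIV. g y $ a $ e * Gamma g e d b y) x = (1/2) * (pd c (pd d (\<lambda>y. g y $ a $ b)) x + pd c (pd b (\<lambda>y. g y $ a $ d)) x - pd c (pd a (\<lambda>y. g y $ d $ b)) x)" .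
  show ?thesis using 1 2 by linarith
qed

lemma T4_antisym:
  assumes x: "x \<in> U"
  shows "Riem_low g a b c d x = - Riem_low g b a c d x"
proof -
  have f1: "\<And>a b. ginv g x $ a $ b = ginv g x $ b $ a" using Hsym[OF x] .
  have f2: "\<And>a b. (\<Sum>c\<in>UNIV. g x $ a $ c * ginv g x $ c $ b) = (if a = b then 1 else 0)" using GH[OF x] .
  have f3: "\<And>k a b. pd k (\<lambda>y. g y $ a $ b) x = pd k (\<lambda>y. g y $ b $ a) x" using dG_sym[OF x] .
  have f4: "\<And>c d a b. pd c (pd d (\<lambda>y. g y $ a $ b)) x = pd d (pd c (\<lambda>y. g y $ a $ b)) x"
    by (rule schwarz[OF U_open x G_Dn])
  have f5: "\<And>c d a b. pd c (pd d (\<lambda>y. g y $ a $ b)) x = pd c (pd d (\<lambda>y. g y $ b $ a)) x"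
    using ddG_sym[OF x] .
  define G1 where "G1 f d b = (1/2) * (pd d (\<lambda>y. g y $ f $ b) x + pd b (\<lambda>y. g y $ f $ d) x - pd f (\<lambda>y. g y $ d $ b) x)" for f d b
  have f6: "\<And>f d b. G1 f d b = (1/2) * (pd d (\<lambda>y. g y $ f $ b) x + pd b (\<lambda>y. g y $ f $ d) x - pd f (\<lambda>y. g y $ d $ b) x)"
    unfolding G1_def ..
  have f7: "\<And>e d b. Gamma g e d b x = (\<Sum>f\<in>UNIV. ginv g x $ e $ f * G1 f d b)"
    unfolding Gamma_def G1_def by (simp add: sum_distrib_left)
  have f8: "\<And>c a d b. (\<Sum>e\<in>UNIV. g x $ a $ e * pd c (\<lambda>y. Gamma g e d b y) x)
    = (1/2) * (pd c (pd d (\<lambda>y. g y $ a $ b)) x + pd c (pd b (\<lambda>y. g y $ a $ d)) x - pd c (pd a (\<lambda>y. g y $ d $ b)) x)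
      - (\<Sum>e\<in>UNIV. pd c (\<lambda>y. g y $ a $ e) x * Gamma g e d b x)"
    using dGGamma[OF x] .
  show ?thesis unfolding Riem_low_def Riem_def
    by (rule antisym_alg[of "\<lambda>a b. ginv g x $ a $ b" "\<lambda>a b. g x $ a $ b" "\<lambda>k a b. pd k (\<lambda>y. g y $ a $ b) x"
        "\<lambda>c d a b. pd c (pd d (\<lambda>y. g y $ a $ b)) x" G1 "\<lambda>e d b. Gamma g e d b x"
        "\<lambda>c e d b. pd c (\<lambda>y. Gamma g e d b y) x", OF f1 f2 f3 f4 f5 f6 f7 f8])
qed

end


lemma swap_in3: "(\<Sum>b\<in>UNIV. \<Sum>c\<in>UNIV. \<Sum>d\<in>UNIV. f b c d) = (\<Sum>d\<in>UNIV. \<Sum>b\<in>UNIV. \<Sum>c\<in>UNIV. (f b c d :: real))"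
proof -
  have "(\<Sum>b\<in>UNIV. \<Sum>c\<in>UNIV. \<Sum>d\<in>UNIV. f b c d) = (\<Sum>b\<in>UNIV. \<Sum>d\<in>UNIV. \<Sum>c\<in>UNIV. f b c d)"
    by (rule sum.cong[OF refl], rule sum.swap)
  also have "\<dots> = (\<Sum>d\<in>UNIV. \<Sum>b\<in>UNIV. \<Sum>c\<in>UNIV. f b c d)" by (rule sum.swap)
  finally show ?thesis .
qed

lemma contr4_prod1: "contr4 (\<lambda>a b c d. A a c * B b d) u v w z = contr2 A u w * contr2 B v z"
proof -
  have "contr2 A u w * contr2 B v z = (\<Sum>a\<in>UNIV. \<Sum>b\<in>UNIV. \<Sum>c\<in>UNIV. \<Sum>d\<in>UNIV. A a c * B b d * u $ a * v $ b * w $ c * z $ d)"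
    unfolding contr2_def sum_product by (simp add: sum_product mult_ac)
  then show ?thesis unfolding contr4_def by simp
qed

lemma contr4_prod2: "contr4 (\<lambda>a b c d. A a d * B b c) u v w z = contr2 A u z * contr2 B v w"
proof -
  have "contr2 A u z * contr2 B v w = (\<Sum>a\<in>UNIV. \<Sum>b\<in>UNIV. \<Sum>d\<in>UNIV. \<Sum>c\<in>UNIV. A a d * B b c * u $ a * v $ b * w $ c * z $ d)"
    unfolding contr2_def sum_product by (simp add: sum_product mult_ac)
  also have "\<dots> = contr4 (\<lambda>a b c d. A a d * B b c) u v w z"
    unfolding contr4_def by (rule sum.cong[OF refl], rule sum.cong[OF refl], rule sum.swap)
  finally show ?thesis ..
qed

lemma contr4_prod3: "contr4 (\<lambda>a b c d. A b c * B a d) u v w z = contr2 A v w * contr2 B u z"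
  using contr4_prod2[of B A u v w z] by (simp add: mult_ac)

lemma contr4_prod4: "contr4 (\<lambda>a b c d. A b d * B a c) u v w z = contr2 A v z * contr2 B u w"
  using contr4_prod1[of B A u v w z] by (simp add: mult_ac)

lemma contr4_add: "contr4 (\<lambda>a b c d. T1 a b c d + T2 a b c d) u v w z = contr4 T1 u v w z + contr4 T2 u v w z"
  unfolding contr4_def by (simp add: algebra_simps sum.distrib)
lemma contr4_diff: "contr4 (\<lambda>a b c d. T1 a b c d - T2 a b c d) u v w z = contr4 T1 u v w z - contr4 T2 u v w z"
  unfolding contr4_def by (simp add: algebra_simps sum_subtractf)
lemma contr4_cmult: "contr4 (\<lambda>a b c d. k * T1 a b c d) u v w z = k * contr4 T1 u v w z"
  unfolding contr4_def by (simp add: sum_distrib_left mult_ac)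
lemma contr4_divide: "contr4 (\<lambda>a b c d. T1 a b c d / k) u v w z = contr4 T1 u v w z / k"
  unfolding contr4_def by (simp add: sum_divide_distrib)

lemma ip_contr2: "ip g x u v = contr2 (\<lambda>a b. g x $ a $ b) u v"
  unfolding ip_def contr2_def ..

lemma Weyl_contr:
  fixes g :: "real^'n::finite \<Rightarrow> real^'n^'n"
  shows "contr4 (\<lambda>a b c d. Weyl g a b c d x) u v w z = contr4 (\<lambda>a b c d. Riem_low g a b c d x) u v w z
     - (ip g x u w * contr2 (\<lambda>a b. Ric g a b x) v z - ip g x u z * contr2 (\<lambda>a b. Ric g a b x) v w
        - ip g x v w * contr2 (\<lambda>a b. Ric g a b x) u z + ip g x v z * contr2 (\<lambda>a b. Ric g a b x) u w) / (real CARD('n) - 2)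
     + scal g x * (ip g x u w * ip g x v z - ip g x u z * ip g x v w) / ((real CARD('n) - 1) * (real CARD('n) - 2))"
proof -
  let ?G = "\<lambda>a b. g x $ a $ b" and ?R = "\<lambda>a b. Ric g a b x"
  have "contr4 (\<lambda>a b c d. Weyl g a b c d x) u v w z =
    contr4 (\<lambda>a b c d. Riem_low g a b c d x
     - (?G a c * ?R b d - ?G a d * ?R b c - ?R a d * ?G b c + ?G b d * ?R a c) / (real CARD('n) - 2)
     + scal g x * (?G a c * ?G b d - ?G a d * ?G b c) / ((real CARD('n) - 1) * (real CARD('n) - 2))) u v w z"
    unfolding Weyl_def Let_def by (simp add: mult.commute)
  also have "\<dots> = contr4 (\<lambda>a b c d. Riem_low g a b c d x) u v w z
     - (contr4 (\<lambda>a b c d. ?G a c * ?R b d) u v w z - contr4 (\<lambda>a b c d. ?G a d * ?R b c) u v w z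
        - contr4 (\<lambda>a b c d. ?R a d * ?G b c) u v w z + contr4 (\<lambda>a b c d. ?G b d * ?R a c) u v w z) / (real CARD('n) - 2)
     + scal g x * (contr4 (\<lambda>a b c d. ?G a c * ?G b d) u v w z - contr4 (\<lambda>a b c d. ?G a d * ?G b c) u v w z)
        / ((real CARD('n) - 1) * (real CARD('n) - 2))"
    unfolding contr4_add contr4_diff contr4_divide times_divide_eq_right[symmetric] contr4_cmult ..
  also have "\<dots> = contr4 (\<lambda>a b c d. Riem_low g a b c d x) u v w z
     - (ip g x u w * contr2 ?R v z - ip g x u z * contr2 ?R v w
        - ip g x v w * contr2 ?R u z + ip g x v z * contr2 ?R u w) / (real CARD('n) - 2)
     + scal g x * (ip g x u w * ip g x v z - ip g x u z * ip g x v w) / ((real CARD('n) - 1) * (real CARD('n) - 2))"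
    unfolding contr4_prod1 contr4_prod2 contr4_prod3[of ?G ?R] contr4_prod4 ip_contr2 by (simp add: mult_ac)
  finally show ?thesis .
qed


lemma swap_out3: "(\<Sum>a\<in>UNIV. \<Sum>c\<in>UNIV. \<Sum>d\<in>UNIV. f a c d) = (\<Sum>c\<in>UNIV. \<Sum>d\<in>UNIV. \<Sum>a\<in>UNIV. (f a c d :: real))"
proof -
  have "(\<Sum>a\<in>UNIV. \<Sum>c\<in>UNIV. \<Sum>d\<in>UNIV. f a c d) = (\<Sum>c\<in>UNIV. \<Sum>a\<in>UNIV. \<Sum>d\<in>UNIV. f a c d)"
    by (rule sum.swap)
  also have "\<dots> = (\<Sum>c\<in>UNIV. \<Sum>d\<in>UNIV. \<Sum>a\<in>UNIV. f a c d)"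
    by (rule sum.cong[OF refl], rule sum.swap)
  finally show ?thesis .
qed

lemma swap_out4: "(\<Sum>a\<in>UNIV. \<Sum>b\<in>UNIV. \<Sum>c\<in>UNIV. \<Sum>d\<in>UNIV. f a b c d)
   = (\<Sum>b\<in>UNIV. \<Sum>c\<in>UNIV. \<Sum>d\<in>UNIV. \<Sum>a\<in>UNIV. (f a b c d :: real))"
proof -
  have "(\<Sum>a\<in>UNIV. \<Sum>b\<in>UNIV. \<Sum>c\<in>UNIV. \<Sum>d\<in>UNIV. f a b c d) = (\<Sum>b\<in>UNIV. \<Sum>a\<in>UNIV. \<Sum>c\<in>UNIV. \<Sum>d\<in>UNIV. f a b c d)"
    by (rule sum.swap)
  also have "\<dots> = (\<Sum>b\<in>UNIV. \<Sum>c\<in>UNIV. \<Sum>d\<in>UNIV. \<Sum>a\<in>UNIV. f a b c d)"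
    by (rule sum.cong[OF refl], rule swap_out3)
  finally show ?thesis .
qed

context kundt begin

lemma contr4_T4_l:
  assumes x: "x \<in> U"
  shows "contr4 (\<lambda>a b c d. Riem_low g a b c d x) (l x) P Q S
    = (\<Sum>b\<in>UNIV. \<Sum>c\<in>UNIV. \<Sum>d\<in>UNIV. (\<Sum>f\<in>UNIV. lo f x * Riem g f b c d x) * P $ b * Q $ c * S $ d)"
proof -
  have "contr4 (\<lambda>a b c d. Riem_low g a b c d x) (l x) P Q S
    = (\<Sum>b\<in>UNIV. \<Sum>c\<in>UNIV. \<Sum>d\<in>UNIV. \<Sum>a\<in>UNIV. Riem_low g a b c d x * l x $ a * P $ b * Q $ c * S $ d)"
    unfolding contr4_def by (rule swap_out4)
  also have "\<dots> = (\<Sum>b\<in>UNIV. \<Sum>c\<in>UNIV. \<Sum>d\<in>UNIV. (\<Sum>f\<in>UNIV. lo f x * Riem g f b c d x) * P $ b * Q $ c * S $ d)"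
  proof (intro sum.cong refl)
    fix b c d
    have "(\<Sum>a\<in>UNIV. Riem_low g a b c d x * l x $ a) = (\<Sum>a\<in>UNIV. \<Sum>f\<in>UNIV. g x $ f $ a * l x $ a * Riem g f b c d x)"
      unfolding Riem_low_def by (simp add: sum_distrib_right sum_distrib_left mult_ac Gsym[OF x])
    also have "\<dots> = (\<Sum>f\<in>UNIV. \<Sum>a\<in>UNIV. g x $ f $ a * l x $ a * Riem g f b c d x)" by (rule sum.swap)
    also have "\<dots> = (\<Sum>f\<in>UNIV. lo f x * Riem g f b c d x)" by (simp add: sum_distrib_right)
    finally have e: "(\<Sum>a\<in>UNIV. Riem_low g a b c d x * l x $ a) = (\<Sum>f\<in>UNIV. lo f x * Riem g f b c d x)" .
    have "(\<Sum>a\<in>UNIV. Riem_low g a b c d x * l x $ a * P $ b * Q $ c * S $ d)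
       = (\<Sum>a\<in>UNIV. Riem_low g a b c d x * l x $ a) * P $ b * Q $ c * S $ d"
      by (simp add: sum_distrib_right)
    then show "(\<Sum>a\<in>UNIV. Riem_low g a b c d x * l x $ a * P $ b * Q $ c * S $ d)
       = (\<Sum>f\<in>UNIV. lo f x * Riem g f b c d x) * P $ b * Q $ c * S $ d"
      unfolding e .
  qed
  finally show ?thesis .
qed

lemma KK:
  assumes x: "x \<in> U" and P: "ip g x (l x) P = 0" and Q: "ip g x (l x) Q = 0" and S: "ip g x (l x) S = 0"
  shows "contr4 (\<lambda>a b c d. Riem_low g a b c d x) (l x) P Q S = 0"
  unfolding contr4_T4_l[OF x] using claimK[OF x P Q S] .

end


context kundt begin

lemma ip_axis_right: "ip g y u (axis e 1) = (\<Sum>b\<in>UNIV. g y $ b $ e * u $ b)"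
proof -
  have "ip g y u (axis e 1) = (\<Sum>b\<in>UNIV. \<Sum>c\<in>UNIV. if c = e then g y $ b $ c * u $ b else 0)"
    unfolding ip_def axis_def by (intro sum.cong refl) auto
  also have "\<dots> = (\<Sum>b\<in>UNIV. g y $ b $ e * u $ b)" by simp
  finally show ?thesis .
qed

lemma Hfr:
  assumes x: "x \<in> U"
  shows "ginv g x $ a $ d = l x $ a * nv x $ d + nv x $ a * l x $ d
     + (\<Sum>k\<in>{2..CARD('n)-1}. m k x $ a * m k x $ d)"
proof -
  define K where "K a d = l x $ a * nv x $ d + nv x $ a * l x $ d + (\<Sum>k\<in>{2..CARD('n)-1}. m k x $ a * m k x $ d)" for a d
  have KG: "(\<Sum>b\<in>UNIV. K a b * g x $ b $ e) = (if a = e then 1 else 0)" for a e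
  proof -
    have "(\<Sum>b\<in>UNIV. K a b * g x $ b $ e) = l x $ a * (\<Sum>b\<in>UNIV. g x $ b $ e * nv x $ b)
        + nv x $ a * (\<Sum>b\<in>UNIV. g x $ b $ e * l x $ b)
        + (\<Sum>k\<in>{2..CARD('n)-1}. m k x $ a * (\<Sum>b\<in>UNIV. g x $ b $ e * m k x $ b))"
    proof -
      have "(\<Sum>b\<in>UNIV. K a b * g x $ b $ e) = (\<Sum>b\<in>UNIV. l x $ a * (g x $ b $ e * nv x $ b)
          + nv x $ a * (g x $ b $ e * l x $ b)
          + (\<Sum>k\<in>{2..CARD('n)-1}. m k x $ a * (g x $ b $ e * m k x $ b)))"
        unfolding K_def by (intro sum.cong refl) (simp add: algebra_simps sum_distrib_right sum_distrib_left)
      also have "\<dots> = l x $ a * (\<Sum>b\<in>UNIV. g x $ b $ e * nv x $ b)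
        + nv x $ a * (\<Sum>b\<in>UNIV. g x $ b $ e * l x $ b)
        + (\<Sum>b\<in>UNIV. \<Sum>k\<in>{2..CARD('n)-1}. m k x $ a * (g x $ b $ e * m k x $ b))"
        by (simp add: sum.distrib sum_distrib_left)
      also have "(\<Sum>b\<in>UNIV. \<Sum>k\<in>{2..CARD('n)-1}. m k x $ a * (g x $ b $ e * m k x $ b))
          = (\<Sum>k\<in>{2..CARD('n)-1}. m k x $ a * (\<Sum>b\<in>UNIV. g x $ b $ e * m k x $ b))"
        by (subst sum.swap) (simp add: sum_distrib_left)
      finally show ?thesis .
    qed
    also have "\<dots> = axis e 1 $ a"
      using arg_cong[OF complete[OF x, of "axis e 1"], of "\<lambda>v. v $ a"]
      unfolding ip_axis_right by (simp add: mult_ac)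
    also have "\<dots> = (if a = e then 1 else 0)" by (simp add: axis_def)
    finally show ?thesis .
  qed
  have "(\<Sum>e\<in>UNIV. (if a = e then 1 else 0) * ginv g x $ e $ d) = (\<Sum>e\<in>UNIV. if a = e then ginv g x $ e $ d else 0)"
    by (intro sum.cong refl) simp
  then have "ginv g x $ a $ d = (\<Sum>e\<in>UNIV. (if a = e then 1 else 0) * ginv g x $ e $ d)"
    by simp
  also have "\<dots> = (\<Sum>e\<in>UNIV. \<Sum>b\<in>UNIV. K a b * g x $ b $ e * ginv g x $ e $ d)"
    unfolding KG[symmetric] by (simp add: sum_distrib_right)
  also have "\<dots> = (\<Sum>b\<in>UNIV. \<Sum>e\<in>UNIV. K a b * g x $ b $ e * ginv g x $ e $ d)" by (rule sum.swap)
  also have "\<dots> = (\<Sum>b\<in>UNIV. K a b * (if b = d then 1 else 0))"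
    by (simp add: sum_distrib_left[symmetric] mult.assoc GH[OF x])
  also have "\<dots> = (\<Sum>b\<in>UNIV. if b = d then K a b else 0)" by (intro sum.cong refl) simp
  also have "\<dots> = K a d" by simp
  finally show ?thesis unfolding K_def .
qed

end


context kundt begin

lemma Riem_from_low:
  assumes x: "x \<in> U"
  shows "Riem g a b c d x = (\<Sum>e\<in>UNIV. ginv g x $ a $ e * Riem_low g e b c d x)"
proof -
  have "(\<Sum>e\<in>UNIV. ginv g x $ a $ e * Riem_low g e b c d x)
      = (\<Sum>e\<in>UNIV. \<Sum>f\<in>UNIV. ginv g x $ a $ e * g x $ e $ f * Riem g f b c d x)"
    unfolding Riem_low_def by (simp add: sum_distrib_left mult_ac)
  also have "\<dots> = (\<Sum>f\<in>UNIV. \<Sum>e\<in>UNIV. ginv g x $ a $ e * g x $ e $ f * Riem g f b c d x)" by (rule sum.swap)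
  also have "\<dots> = (\<Sum>f\<in>UNIV. (if a = f then 1 else 0) * Riem g f b c d x)"
    by (simp add: sum_distrib_right[symmetric] HG[OF x])
  also have "\<dots> = (\<Sum>f\<in>UNIV. if a = f then Riem g f b c d x else 0)" by (intro sum.cong refl) simp
  also have "\<dots> = Riem g a b c d x" by simp
  finally show ?thesis ..
qed

lemma contr4_antisym:
  assumes x: "x \<in> U"
  shows "contr4 (\<lambda>a b c d. Riem_low g a b c d x) u v w z = - contr4 (\<lambda>a b c d. Riem_low g a b c d x) v u w z"
proof -
  have eqT: "(\<lambda>a b c d. Riem_low g a b c d x) = (\<lambda>a b c d. - Riem_low g b a c d x)"
    by (intro ext) (rule T4_antisym[OF x])
  have "contr4 (\<lambda>a b c d. Riem_low g a b c d x) u v w z = contr4 (\<lambda>a b c d. - Riem_low g b a c d x) u v w z"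
    by (simp only: eqT)
  also have "\<dots> = - contr4 (\<lambda>a b c d. Riem_low g a b c d x) v u w z"
    unfolding contr4_def by (subst sum.swap) (simp add: sum_negf mult_ac)
  finally show ?thesis .
qed

lemma Ric_trace:
  assumes x: "x \<in> U"
  shows "contr2 (\<lambda>b d. Ric g b d x) v z = (\<Sum>a\<in>UNIV. \<Sum>e\<in>UNIV. ginv g x $ a $ e *
      (\<Sum>b\<in>UNIV. \<Sum>d\<in>UNIV. Riem_low g e b a d x * v $ b * z $ d))"
proof -
  have "contr2 (\<lambda>b d. Ric g b d x) v z
      = (\<Sum>b\<in>UNIV. \<Sum>d\<in>UNIV. \<Sum>a\<in>UNIV. \<Sum>e\<in>UNIV. ginv g x $ a $ e * (Riem_low g e b a d x * v $ b * z $ d))"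
    unfolding contr2_def Ric_def Riem_from_low[OF x] by (simp add: sum_distrib_right sum_distrib_left mult_ac)
  also have "\<dots> = (\<Sum>d\<in>UNIV. \<Sum>a\<in>UNIV. \<Sum>e\<in>UNIV. \<Sum>b\<in>UNIV. ginv g x $ a $ e * (Riem_low g e b a d x * v $ b * z $ d))"
    by (rule swap_out4)
  also have "\<dots> = (\<Sum>a\<in>UNIV. \<Sum>e\<in>UNIV. \<Sum>b\<in>UNIV. \<Sum>d\<in>UNIV. ginv g x $ a $ e * (Riem_low g e b a d x * v $ b * z $ d))"
    by (rule swap_out4)
  also have "\<dots> = (\<Sum>a\<in>UNIV. \<Sum>e\<in>UNIV. ginv g x $ a $ e *
      (\<Sum>b\<in>UNIV. \<Sum>d\<in>UNIV. Riem_low g e b a d x * v $ b * z $ d))"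
    by (simp add: sum_distrib_left)
  finally show ?thesis .
qed

lemma Xeq:
  "(\<Sum>a\<in>UNIV. \<Sum>e\<in>UNIV. p $ a * q $ e * (\<Sum>b\<in>UNIV. \<Sum>d\<in>UNIV. Riem_low g e b a d x * v $ b * z $ d))
    = contr4 (\<lambda>a b c d. Riem_low g a b c d x) q v p z"
proof -
  have "(\<Sum>a\<in>UNIV. \<Sum>e\<in>UNIV. p $ a * q $ e * (\<Sum>b\<in>UNIV. \<Sum>d\<in>UNIV. Riem_low g e b a d x * v $ b * z $ d))
    = (\<Sum>a\<in>UNIV. \<Sum>e\<in>UNIV. \<Sum>b\<in>UNIV. \<Sum>d\<in>UNIV. Riem_low g e b a d x * q $ e * v $ b * p $ a * z $ d)"
    by (simp add: sum_distrib_left mult_ac)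
  also have "\<dots> = (\<Sum>e\<in>UNIV. \<Sum>a\<in>UNIV. \<Sum>b\<in>UNIV. \<Sum>d\<in>UNIV. Riem_low g e b a d x * q $ e * v $ b * p $ a * z $ d)"
    by (rule sum.swap)
  also have "\<dots> = (\<Sum>e\<in>UNIV. \<Sum>b\<in>UNIV. \<Sum>a\<in>UNIV. \<Sum>d\<in>UNIV. Riem_low g e b a d x * q $ e * v $ b * p $ a * z $ d)"
    by (rule sum.cong[OF refl], rule sum.swap)
  also have "\<dots> = contr4 (\<lambda>a b c d. Riem_low g a b c d x) q v p z"
    unfolding contr4_def ..
  finally show ?thesis .
qed

end


context kundt begin

lemma ipsym: "x \<in> U \<Longrightarrow> ip g x u v = ip g x v u"
  using ip_sym[of g x] Gsym by blast

lemma T4_lnlm: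
  assumes x: "x \<in> U" and i: "i \<in> {2..CARD('n)-1}"
  shows "contr4 (\<lambda>a b c d. Riem_low g a b c d x) (l x) (nv x) (l x) (m i x) = 0"
proof -
  let ?T = "\<lambda>a b c d. Riem_low g a b c d x"
  let ?I = "{2..CARD('n)-1}"
  define C where "C a e = (\<Sum>b\<in>UNIV. \<Sum>d\<in>UNIV. Riem_low g e b a d x * l x $ b * m i x $ d)" for a e
  define X where "X p q = (\<Sum>a\<in>UNIV. \<Sum>e\<in>UNIV. p $ a * q $ e * C a e)" for p q
  have Xc: "X p q = contr4 ?T q (l x) p (m i x)" for p q unfolding X_def C_def by (rule Xeq)
  have lm: "ip g x (l x) (m k x) = 0" if "k \<in> ?I" for k using frame[OF x] that unfolding null_frame_def by auto
  have "0 = contr2 (\<lambda>b d. Ric g b d x) (l x) (m i x)" using R0i[OF x i] by simp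
  also have "\<dots> = (\<Sum>a\<in>UNIV. \<Sum>e\<in>UNIV. ginv g x $ a $ e * C a e)" unfolding Ric_trace[OF x] C_def ..
  also have "\<dots> = (\<Sum>a\<in>UNIV. \<Sum>e\<in>UNIV. l x $ a * nv x $ e * C a e + nv x $ a * l x $ e * C a e
      + (\<Sum>k\<in>?I. m k x $ a * m k x $ e * C a e))"
    unfolding Hfr[OF x] by (simp add: algebra_simps sum_distrib_right sum_distrib_left)
  also have "\<dots> = X (l x) (nv x) + X (nv x) (l x) + (\<Sum>a\<in>UNIV. \<Sum>e\<in>UNIV. \<Sum>k\<in>?I. m k x $ a * m k x $ e * C a e)"
    unfolding X_def by (simp add: sum.distrib)
  also have "(\<Sum>a\<in>UNIV. \<Sum>e\<in>UNIV. \<Sum>k\<in>?I. m k x $ a * m k x $ e * C a e) = (\<Sum>k\<in>?I. X (m k x) (m k x))"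
  proof -
    have "(\<Sum>a\<in>UNIV. \<Sum>e\<in>UNIV. \<Sum>k\<in>?I. m k x $ a * m k x $ e * C a e)
       = (\<Sum>a\<in>UNIV. \<Sum>k\<in>?I. \<Sum>e\<in>UNIV. m k x $ a * m k x $ e * C a e)"
      by (rule sum.cong[OF refl], rule sum.swap)
    also have "\<dots> = (\<Sum>k\<in>?I. \<Sum>a\<in>UNIV. \<Sum>e\<in>UNIV. m k x $ a * m k x $ e * C a e)" by (rule sum.swap)
    finally show ?thesis unfolding X_def .
  qed
  also have "(\<Sum>k\<in>?I. X (m k x) (m k x)) = 0"
  proof (rule sum.neutral, rule ballI)
    fix k assume k: "k \<in> ?I"
    have "X (m k x) (m k x) = - contr4 ?T (l x) (m k x) (m k x) (m i x)"
      unfolding Xc by (rule contr4_antisym[OF x])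
    also have "\<dots> = 0" using KK[OF x lm[OF k] lm[OF k] lm[OF i]] by simp
    finally show "X (m k x) (m k x) = 0" .
  qed
  also have "X (nv x) (l x) = 0"
  proof -
    have "X (nv x) (l x) = - X (nv x) (l x)"
      unfolding Xc by (rule contr4_antisym[OF x])
    then show ?thesis by simp
  qed
  also have "X (l x) (nv x) = - contr4 ?T (l x) (nv x) (l x) (m i x)"
    unfolding Xc by (rule contr4_antisym[OF x])
  finally show ?thesis by simp
qed

theorem main:
  "\<forall>x\<in>U. \<forall>i\<in>{2..CARD('n)-1}. \<forall>j\<in>{2..CARD('n)-1}. \<forall>k\<in>{2..CARD('n)-1}.
     contr4 (\<lambda>a b c d. Weyl g a b c d x) (l x) (m i x) (l x) (m j x) = 0 \<and>
     contr4 (\<lambda>a b c d. Weyl g a b c d x) (l x) (nv x) (l x) (m i x) = 0 \<and>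
     contr4 (\<lambda>a b c d. Weyl g a b c d x) (l x) (m i x) (m j x) (m k x) = 0"
proof (intro ballI conjI)
  fix x i j k assume x: "x \<in> U" and i: "i \<in> {2..CARD('n)-1}" and j: "j \<in> {2..CARD('n)-1}"
    and k: "k \<in> {2..CARD('n)-1}"
  have ll: "ip g x (l x) (l x) = 0" and ln: "ip g x (l x) (nv x) = 1"
    using frame[OF x] unfolding null_frame_def by auto
  have lm: "ip g x (l x) (m q x) = 0" and nm: "ip g x (nv x) (m q x) = 0"
    if "q \<in> {2..CARD('n)-1}" for q using frame[OF x] that unfolding null_frame_def by auto
  have ml: "ip g x (m q x) (l x) = 0" if "q \<in> {2..CARD('n)-1}" for q using lm[OF that] ipsym[OF x] by metis
  have nl: "ip g x (nv x) (l x) = 1" using ln ipsym[OF x] by metis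
  show "contr4 (\<lambda>a b c d. Weyl g a b c d x) (l x) (m i x) (l x) (m j x) = 0"
    unfolding Weyl_contr using KK[OF x lm[OF i] ll lm[OF j]] ll lm[OF j] ml[OF i] R00[OF x] by simp
  show "contr4 (\<lambda>a b c d. Weyl g a b c d x) (l x) (nv x) (l x) (m i x) = 0"
    unfolding Weyl_contr using T4_lnlm[OF x i] ll lm[OF i] nl nm[OF i] R0i[OF x i] by simp
  show "contr4 (\<lambda>a b c d. Weyl g a b c d x) (l x) (m i x) (m j x) (m k x) = 0"
    unfolding Weyl_contr using KK[OF x lm[OF i] lm[OF j] lm[OF k]] lm[OF j] lm[OF k] R0i[OF x j] R0i[OF x k] by simp
qed

end

theorem proposition2:
  fixes U :: "(real^'n::finite) set"
    and g :: "real^'n \<Rightarrow> real^'n^'n"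
    and l nv :: "real^'n \<Rightarrow> real^'n"
    and m :: "nat \<Rightarrow> real^'n \<Rightarrow> real^'n"
  assumes dim: "CARD('n) \<ge> 4"
    and U_open: "open U"
    and g_smooth: "\<And>a b. smooth_on U (\<lambda>x. g x $ a $ b)"
    and g_lor: "\<And>x. x \<in> U \<Longrightarrow> lorentzian_matrix (g x)"
    and l_smooth: "\<And>a. smooth_on U (\<lambda>x. l x $ a)"
    and frame: "\<And>x. x \<in> U \<Longrightarrow> null_frame g x (l x) (nv x) (\<lambda>i. m i x)"
    and kundt_i0: "\<And>x i. x \<in> U \<Longrightarrow> i \<in> {2..CARD('n)-1} \<Longrightarrow>
                      contr2 (\<lambda>a b. cov_low g l a b x) (m i x) (l x) = 0"
    and kundt_ij: "\<And>x i j. x \<in> U \<Longrightarrow> i \<in> {2..CARD('n)-1} \<Longrightarrow> j \<in> {2..CARD('n)-1} \<Longrightarrow>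
                      contr2 (\<lambda>a b. cov_low g l a b x) (m i x) (m j x) = 0"
    and R00: "\<And>x. x \<in> U \<Longrightarrow> contr2 (\<lambda>a b. Ric g a b x) (l x) (l x) = 0"
    and R0i: "\<And>x i. x \<in> U \<Longrightarrow> i \<in> {2..CARD('n)-1} \<Longrightarrow>
                 contr2 (\<lambda>a b. Ric g a b x) (l x) (m i x) = 0"
  shows "\<forall>x\<in>U. \<forall>i\<in>{2..CARD('n)-1}. \<forall>j\<in>{2..CARD('n)-1}. \<forall>k\<in>{2..CARD('n)-1}.
           contr4 (\<lambda>a b c d. Weyl g a b c d x) (l x) (m i x) (l x) (m j x) = 0 \<and>
           contr4 (\<lambda>a b c d. Weyl g a b c d x) (l x) (nv x) (l x) (m i x) = 0 \<and>
           contr4 (\<lambda>a b c d. Weyl g a b c d x) (l x) (m i x) (m j x) (m k x) = 0"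
proof -
  interpret kundt U g l nv m
    by (rule kundt.intro[OF dim U_open g_smooth g_lor l_smooth frame kundt_i0 kundt_ij R00 R0i])
  show ?thesis by (rule main)
qed

end
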